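(* Let $\pi$ be a probability distribution on a finite set $\mathcal C$, $D\in\mathbb N$, $\alpha\in[0,1]$, and for $d=1,\dots,D$ let $K_{d,+1},K_{d,-1}$ be Markov kernels on $\mathcal C$ with \[ \pi(c)K_{d,+1}(c,c')=\pi(c')K_{d,-1}(c',c)\quad\text{for all }c\neq c',\ d=1,\dots,D. \] Let $K_d=(K_{d,+1}+K_{d,-1})/2$ and let $(p_c(d))_{d=1}^D$ be probability weights for each $c\in\mathcal C$ such that $p_c(d)=p_{c'}(d)$ whenever $K_d(c,c')>0$. Define $K_R(c,c')=\sum_{d=1}^Dp_c(d)K_d(c,c')$ on $\mathcal C$ and $K_{NR}((c,v),(c',v'))=\sum_{d=1}^Dp_c(d)(F_dK_{\mathrm{lift},d}F_d)((c,v),(c',v'))$ on $\mathcal C\times\{-1,+1\}^D$, with $F_d$, $K_{\mathrm{lift},d}$ as in the context. Then: (a) $K_R$ is $\pi$-reversible; (b) $K_{NR}$ is $\tilde\pi$-invariant, where $\tilde\pi(c,v)=\pi(c)2^{-D}$; (c) for every $\tilde g:\mathcal C\to\mathbb R$ and $g(c,v):=\tilde g(c)$, $\mathrm{Var}(g,K_{NR})\le\mathrm{Var}(\tilde g,K_R)$.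
   Context: $F_d((c,v),(c',v'))=\mathbb 1(c=c')\bigl[(1-\alpha)\mathbb 1(v=v')+\alpha\,\mathbb 1(v_{-d}=v'_{-d},\,v'_d=-v_d)\bigr]$, where $v_{-d}$ denotes $v$ without its $d$-th coordinate. $K_{\mathrm{lift},d}((c,v),(c',v'))=K_{d,v_d}(c,c')\,Q_{d,c,c'}(v,v')$ with $Q_{d,c,c'}(v,v')=\mathbb 1(v_{-d}=v'_{-d})\bigl[\mathbb 1(c\ne c')\mathbb 1(v_d=v'_d)+\mathbb 1(c=c')\mathbb 1(v_d=-v'_d)\bigr]$; products of kernels denote composition. Asymptotic variance: for a kernel $P$ with invariant distribution $\mu$ and chain $(X_t)$ with kernel $P$, $X_0\sim\mu$, $\mathrm{Var}(g,P)=\lim_{T\to\infty}T\,\mathrm{Var}(\frac1T\sum_{t=1}^Tg(X_t))=\mathrm{Var}_\mu(g)+2\sum_{t\ge1}\mathrm{Cov}(g(X_0),g(X_t))$, in $[0,\infty]$. *)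

theory Defs
  imports "HOL-Analysis.Analysis"
begin

definition kcomp :: "'s set \<Rightarrow> ('s \<Rightarrow> 's \<Rightarrow> real) \<Rightarrow> ('s \<Rightarrow> 's \<Rightarrow> real) \<Rightarrow> 's \<Rightarrow> 's \<Rightarrow> real" where
  "kcomp S P Q x z = (\<Sum>y\<in>S. P x y * Q y z)"

fun kpow :: "'s set \<Rightarrow> ('s \<Rightarrow> 's \<Rightarrow> real) \<Rightarrow> nat \<Rightarrow> 's \<Rightarrow> 's \<Rightarrow> real" where
  "kpow S P 0 = (\<lambda>x y. if x = y then 1 else 0)"
| "kpow S P (Suc n) = kcomp S (kpow S P n) P"

definition law_at :: "'s set \<Rightarrow> ('s \<Rightarrow> real) \<Rightarrow> ('s \<Rightarrow> 's \<Rightarrow> real) \<Rightarrow> nat \<Rightarrow> 's \<Rightarrow> real" where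
  "law_at S mu P t y = (\<Sum>x\<in>S. mu x * kpow S P t x y)"

definition mean_at :: "'s set \<Rightarrow> ('s \<Rightarrow> real) \<Rightarrow> ('s \<Rightarrow> 's \<Rightarrow> real) \<Rightarrow> ('s \<Rightarrow> real) \<Rightarrow> nat \<Rightarrow> real" where
  "mean_at S mu P g t = (\<Sum>y\<in>S. law_at S mu P t y * g y)"

text \<open>E[g(X_s) g(X_t)] for s \<le> t (Markov property)\<close>
definition prod_mom0 :: "'s set \<Rightarrow> ('s \<Rightarrow> real) \<Rightarrow> ('s \<Rightarrow> 's \<Rightarrow> real) \<Rightarrow> ('s \<Rightarrow> real) \<Rightarrow> nat \<Rightarrow> nat \<Rightarrow> real" where
  "prod_mom0 S mu P g s t =
     (\<Sum>x\<in>S. \<Sum>y\<in>S. law_at S mu P s x * g x * kpow S P (t - s) x y * g y)"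

definition prod_mom :: "'s set \<Rightarrow> ('s \<Rightarrow> real) \<Rightarrow> ('s \<Rightarrow> 's \<Rightarrow> real) \<Rightarrow> ('s \<Rightarrow> real) \<Rightarrow> nat \<Rightarrow> nat \<Rightarrow> real" where
  "prod_mom S mu P g s t =
     (if s \<le> t then prod_mom0 S mu P g s t else prod_mom0 S mu P g t s)"

text \<open>Var((1/T) \<Sum>_{t=1}^T g(X_t))\<close>
definition var_avg :: "'s set \<Rightarrow> ('s \<Rightarrow> real) \<Rightarrow> ('s \<Rightarrow> 's \<Rightarrow> real) \<Rightarrow> ('s \<Rightarrow> real) \<Rightarrow> nat \<Rightarrow> real" where
  "var_avg S mu P g T =
     (1 / (real T)^2) * ((\<Sum>s\<in>{1..T}. \<Sum>t\<in>{1..T}. prod_mom S mu P g s t)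
                        - (\<Sum>t\<in>{1..T}. mean_at S mu P g t)^2)"

definition asym_var :: "'s set \<Rightarrow> ('s \<Rightarrow> real) \<Rightarrow> ('s \<Rightarrow> 's \<Rightarrow> real) \<Rightarrow> ('s \<Rightarrow> real) \<Rightarrow> ereal" where
  "asym_var S mu P g = lim (\<lambda>T. ereal (real T * var_avg S mu P g T))"

text \<open>Velocities in {-1,+1}^D, indexed by d = 1..D; coordinates outside 1..D are fixed to 1.\<close>
definition vels :: "nat \<Rightarrow> (nat \<Rightarrow> int) set" where
  "vels D = {v. (\<forall>d\<in>{1..D}. v d = 1 \<or> v d = -1) \<and> (\<forall>d. d \<notin> {1..D} \<longrightarrow> v d = 1)}"

definition Fd :: "real \<Rightarrow> nat \<Rightarrow> ('c \<times> (nat \<Rightarrow> int)) \<Rightarrow> ('c \<times> (nat \<Rightarrow> int)) \<Rightarrow> real" where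
  "Fd \<alpha> d x y = (case x of (c, v) \<Rightarrow> case y of (c', v') \<Rightarrow>
     (if c = c' then (1 - \<alpha>) * (if v = v' then 1 else 0)
        + \<alpha> * (if (\<forall>j. j \<noteq> d \<longrightarrow> v j = v' j) \<and> v' d = - v d then 1 else 0)
      else 0))"

definition Qd :: "nat \<Rightarrow> 'c \<Rightarrow> 'c \<Rightarrow> (nat \<Rightarrow> int) \<Rightarrow> (nat \<Rightarrow> int) \<Rightarrow> real" where
  "Qd d c c' v v' =
     (if \<forall>j. j \<noteq> d \<longrightarrow> v j = v' j then
        (if c \<noteq> c' \<and> v d = v' d then 1 else 0) + (if c = c' \<and> v d = - v' d then 1 else 0)
      else 0)"

definition Klift :: "(nat \<Rightarrow> int \<Rightarrow> 'c \<Rightarrow> 'c \<Rightarrow> real) \<Rightarrow> nat \<Rightarrow> ('c \<times> (nat \<Rightarrow> int)) \<Rightarrow> ('c \<times> (nat \<Rightarrow> int)) \<Rightarrow> real" where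
  "Klift K d x y = (case x of (c, v) \<Rightarrow> case y of (c', v') \<Rightarrow> K d (v d) c c' * Qd d c c' v v')"

definition Kavg :: "(nat \<Rightarrow> int \<Rightarrow> 'c \<Rightarrow> 'c \<Rightarrow> real) \<Rightarrow> nat \<Rightarrow> 'c \<Rightarrow> 'c \<Rightarrow> real" where
  "Kavg K d c c' = (K d 1 c c' + K d (-1) c c') / 2"

definition KR :: "nat \<Rightarrow> ('c \<Rightarrow> nat \<Rightarrow> real) \<Rightarrow> (nat \<Rightarrow> int \<Rightarrow> 'c \<Rightarrow> 'c \<Rightarrow> real) \<Rightarrow> 'c \<Rightarrow> 'c \<Rightarrow> real" where
  "KR D p K c c' = (\<Sum>d\<in>{1..D}. p c d * Kavg K d c c')"

definition KNR :: "nat \<Rightarrow> real \<Rightarrow> ('c \<Rightarrow> nat \<Rightarrow> real) \<Rightarrow> (nat \<Rightarrow> int \<Rightarrow> 'c::finite \<Rightarrow> 'c \<Rightarrow> real)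
     \<Rightarrow> ('c \<times> (nat \<Rightarrow> int)) \<Rightarrow> ('c \<times> (nat \<Rightarrow> int)) \<Rightarrow> real" where
  "KNR D \<alpha> p K x y =
     (\<Sum>d\<in>{1..D}. p (fst x) d *
        kcomp (UNIV \<times> vels D) (kcomp (UNIV \<times> vels D) (Fd \<alpha> d) (Klift K d)) (Fd \<alpha> d) x y)"

definition pitilde :: "nat \<Rightarrow> ('c \<Rightarrow> real) \<Rightarrow> ('c \<times> (nat \<Rightarrow> int)) \<Rightarrow> real" where
  "pitilde D \<pi> x = \<pi> (fst x) / 2 ^ D"

end

theory Submission
  imports Defs "HOL-Library.Function_Algebras"
begin

definition fscale :: "real \<Rightarrow> ('s \<Rightarrow> real) \<Rightarrow> 's \<Rightarrow> real" where
  "fscale r f = (\<lambda>x. r * f x)"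

interpretation fvs: vector_space "fscale :: real \<Rightarrow> ('s \<Rightarrow> real) \<Rightarrow> 's \<Rightarrow> real"
  by unfold_locales (auto simp: fscale_def algebra_simps fun_eq_iff)

lemma inj_imp_surj_subspace:
  fixes L :: "('s \<Rightarrow> real) \<Rightarrow> ('s \<Rightarrow> real)"
  assumes ladd: "\<And>a b. L (a + b) = L a + L b" and lsc: "\<And>r a. L (fscale r a) = fscale r (L a)"
  and W: "finite W" and U: "U \<subseteq> fvs.span W" "fvs.subspace U"
  and LU: "L ` U \<subseteq> U" and inj: "inj_on L U"
  shows "U \<subseteq> L ` U"
proof -
  interpret lh: module_hom fscale fscale L
    by unfold_locales (auto simp: ladd lsc)
  obtain B where B: "B \<subseteq> U" "fvs.independent B" "U \<subseteq> fvs.span B"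
    using fvs.maximal_independent_subset[of U] by blast
  have Bfin: "finite B" "card B \<le> card W"
    using fvs.independent_span_bound[OF W B(2)] B(1) U(1) by auto
  have spB: "fvs.span B = U"
    using B U(2) fvs.span_minimal[of B U] by auto
  have indL: "fvs.independent (L ` B)"
    using lh.independent_injective_image[OF B(2)] inj spB by simp
  have cardL: "card (L ` B) = card B"
    using card_image[of L B] inj B(1) inj_on_subset by blast
  show ?thesis
  proof
    fix u assume u: "u \<in> U"
    show "u \<in> L ` U"
    proof (rule ccontr)
      assume nu: "u \<notin> L ` U"
      have sp: "fvs.span (L ` B) = L ` U"
        using lh.span_image[of B] spB by simp
      have "u \<notin> fvs.span (L ` B)" using sp nu by simp
      hence ind2: "fvs.independent (insert u (L ` B))"
        using fvs.independent_insertI indL by blast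
      have "insert u (L ` B) \<subseteq> fvs.span B"
        using u LU B(1) spB by auto
      hence "card (insert u (L ` B)) \<le> card B"
        using fvs.independent_span_bound[OF Bfin(1) ind2] by simp
      moreover have "u \<notin> L ` B" using nu B(1) by auto
      ultimately show False using cardL Bfin(1) by simp
    qed
  qed
qed

lemma sum_fun_apply': "(sum F A) x = (\<Sum>a\<in>A. F a x)" for F :: "'a \<Rightarrow> 's \<Rightarrow> real"
  by (induction A rule: infinite_finite_induct) auto

definition app :: "'s set \<Rightarrow> ('s \<Rightarrow> 's \<Rightarrow> real) \<Rightarrow> ('s \<Rightarrow> real) \<Rightarrow> 's \<Rightarrow> real" where
  "app S P f x = (\<Sum>y\<in>S. P x y * f y)"

lemma app_bound:
  assumes Pn: "\<And>x y. x\<in>S \<Longrightarrow> y\<in>S \<Longrightarrow> P x y \<ge> 0" and Ps: "\<And>x. x\<in>S \<Longrightarrow> (\<Sum>y\<in>S. P x y) = 1"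
    and f: "\<And>y. y \<in> S \<Longrightarrow> \<bar>f y\<bar> \<le> M" and x: "x \<in> S"
  shows "\<bar>app S P f x\<bar> \<le> M"
proof -
  have "\<bar>app S P f x\<bar> \<le> (\<Sum>y\<in>S. \<bar>P x y * f y\<bar>)"
    unfolding app_def by (rule sum_abs)
  also have "\<dots> \<le> (\<Sum>y\<in>S. P x y * M)"
    by (rule sum_mono) (use Pn x f in \<open>auto simp: abs_mult intro: mult_left_mono\<close>)
  also have "\<dots> = M" using Ps[OF x] by (simp add: sum_distrib_right[symmetric])
  finally show ?thesis .
qed

lemma decomp:
  fixes P :: "'s \<Rightarrow> 's \<Rightarrow> real" and f :: "'s \<Rightarrow> real"
  assumes S: "finite S" and Pn: "\<And>x y. x\<in>S \<Longrightarrow> y\<in>S \<Longrightarrow> P x y \<ge> 0"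
    and Ps: "\<And>x. x\<in>S \<Longrightarrow> (\<Sum>y\<in>S. P x y) = 1"
  shows "\<exists>h c. (\<forall>x\<in>S. f x = h x - app S P h x + c x) \<and> (\<forall>x\<in>S. app S P c x = c x)"
proof -
  define V where "V = {f :: 's \<Rightarrow> real. \<forall>x. x \<notin> S \<longrightarrow> f x = 0}"
  define rs where "rs f = (\<lambda>x. if x \<in> S then f x else 0)" for f :: "'s \<Rightarrow> real"
  define L where "L f = rs (\<lambda>x. f x - app S P f x)" for f
  have appadd: "app S P (a + b) x = app S P a x + app S P b x" for a b x
    by (simp add: app_def algebra_simps sum.distrib)
  have appsc: "app S P (fscale r a) x = r * app S P a x" for r a x
    by (simp add: app_def fscale_def sum_distrib_left algebra_simps)
  have appdiff: "app S P (a - b) x = app S P a x - app S P b x" for a b x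
    by (simp add: app_def algebra_simps sum_subtractf)
  have ladd: "L (a + b) = L a + L b" for a b
    by (auto simp: L_def rs_def fun_eq_iff appadd)
  have lsc: "L (fscale r a) = fscale r (L a)" for r a
    using appsc by (auto simp: L_def rs_def fun_eq_iff fscale_def algebra_simps)
  have ldiff: "L (a - b) = L a - L b" for a b
    by (auto simp: L_def rs_def fun_eq_iff appdiff)
  define W where "W = (\<lambda>y. \<lambda>x. if x = y then (1::real) else 0) ` S"
  have Wfin: "finite W" using S by (simp add: W_def)
  have VW: "V \<subseteq> fvs.span W"
  proof
    fix f assume f: "f \<in> V"
    have "f = (\<Sum>y\<in>S. fscale (f y) (\<lambda>x. if x = y then 1 else 0))"
    proof
      fix x
      show "f x = (\<Sum>y\<in>S. fscale (f y) (\<lambda>x. if x = y then 1 else 0)) x"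
        using f S by (cases "x \<in> S") (auto simp: sum_fun_apply' fscale_def V_def mult.commute[of "f _"] if_distrib cong: if_cong)
    qed
    also have "\<dots> \<in> fvs.span W"
      by (intro fvs.span_sum fvs.span_scale fvs.span_base) (auto simp: W_def)
    finally show "f \<in> fvs.span W" .
  qed
  define U where "U = L ` V"
  have LV: "L f \<in> V" for f by (simp add: L_def rs_def V_def)
  have UV: "U \<subseteq> V" using LV by (auto simp: U_def)
  have Vsub: "fvs.subspace V"
    by (auto simp: fvs.subspace_def V_def fscale_def)
  have Usub: "fvs.subspace U"
    unfolding fvs.subspace_def U_def
  proof (intro conjI ballI allI)
    show "0 \<in> L ` V" using ladd[of 0 0] Vsub
      by (metis add_cancel_right_left fvs.subspace_0 image_eqI)
  next
    fix x y assume "x \<in> L ` V" "y \<in> L ` V"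
    then obtain a b where "a \<in> V" "b \<in> V" "x = L a" "y = L b" by auto
    thus "x + y \<in> L ` V" using ladd[of a b] Vsub by (metis fvs.subspace_add image_eqI)
  next
    fix c x assume "x \<in> L ` V"
    then obtain a where "a \<in> V" "x = L a" by auto
    thus "fscale c x \<in> L ` V" using lsc[of c a] Vsub by (metis fvs.subspace_scale image_eqI)
  qed
  have kernel: "u = 0" if u: "u \<in> U" and Lu: "L u = 0" for u
  proof -
    obtain h where h: "h \<in> V" "u = L h" using u by (auto simp: U_def)
    have uS: "u x = h x - app S P h x" if "x \<in> S" for x using h that by (simp add: L_def rs_def)
    have uP: "u x = app S P u x" if "x \<in> S" for x
      using fun_cong[OF Lu, of x] that by (simp add: L_def rs_def)
    define it where "it n = (app S P ^^ n) h" for n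
    have itf: "\<forall>x\<in>S. it n x = h x - real n * u x" for n
    proof (induction n)
      case 0 then show ?case by (simp add: it_def)
    next
      case (Suc n)
      show ?case
      proof
        fix x assume x: "x \<in> S"
        have "it (Suc n) x = app S P (it n) x" by (simp add: it_def)
        also have "\<dots> = (\<Sum>y\<in>S. P x y * (h y - real n * u y))"
          unfolding app_def using Suc by (intro sum.cong) auto
        also have "\<dots> = app S P h x - real n * app S P u x"
          by (simp add: app_def algebra_simps sum_subtractf sum_distrib_left)
        also have "\<dots> = h x - real (Suc n) * u x"
          using uS[OF x] uP[OF x] by (simp add: algebra_simps)
        finally show "it (Suc n) x = h x - real (Suc n) * u x" .
      qed
    qed
    define M where "M = (\<Sum>y\<in>S. \<bar>h y\<bar>)"
    have hM: "\<bar>h y\<bar> \<le> M" if "y \<in> S" for y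
      unfolding M_def using S that by (intro member_le_sum) auto
    have itM: "\<forall>x\<in>S. \<bar>it n x\<bar> \<le> M" for n
    proof (induction n)
      case 0 then show ?case using hM by (simp add: it_def)
    next
      case (Suc n) then show ?case
        using app_bound[OF Pn Ps, where f="it n" and M=M] by (simp add: it_def)
    qed
    have "u x = 0" for x
    proof (cases "x \<in> S")
      case False then show ?thesis using h LV by (simp add: V_def)
    next
      case True
      show ?thesis
      proof (rule ccontr)
        assume ne: "u x \<noteq> 0"
        obtain n :: nat where n: "(2 * M + 1) / \<bar>u x\<bar> < real n" using reals_Archimedean2 by blast
        have "2 * M + 1 < real n * \<bar>u x\<bar>" using n ne by (simp add: divide_less_eq)
        moreover have "\<bar>h x - real n * u x\<bar> \<le> M" using itM[of n] itf[of n] True by auto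
        moreover have "\<bar>h x\<bar> \<le> M" using hM True by auto
        ultimately show False by (auto simp: abs_mult abs_le_iff)
      qed
    qed
    thus ?thesis by auto
  qed
  have inj: "inj_on L U"
  proof (rule inj_onI)
    fix a b assume ab: "a \<in> U" "b \<in> U" "L a = L b"
    have "a - b \<in> U" using ab Usub by (simp add: fvs.subspace_diff)
    moreover have "L (a - b) = 0" using ab ldiff by simp
    ultimately have "a - b = 0" using kernel by blast
    thus "a = b" by (simp only: right_minus_eq)
  qed
  have LUU: "L ` U \<subseteq> U" using UV by (auto simp: U_def)
  have surj: "U \<subseteq> L ` U"
    using inj_imp_surj_subspace[OF ladd lsc Wfin _ Usub LUU inj] UV VW by blast
  have "L (rs f) \<in> U" unfolding U_def by (rule imageI) (simp add: V_def rs_def)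
  with surj have "L (rs f) \<in> L ` U" by (rule subsetD)
  then obtain u where u: "u \<in> U" "L (rs f) = L u" by (rule imageE)
  from u(1) obtain h0 where h0: "u = L h0" unfolding U_def by (rule imageE)
  define c where "c = rs f - u"
  have Lc: "L c = 0" using u(2) ldiff[of "rs f" u] by (simp add: c_def)
  show ?thesis
  proof (intro exI conjI ballI)
    fix x assume x: "x \<in> S"
    have "c x = f x - u x" using x by (simp add: c_def rs_def)
    moreover have "u x = h0 x - app S P h0 x" using x h0 by (simp add: L_def rs_def)
    ultimately show "f x = h0 x - app S P h0 x + c x" by simp
    show "app S P c x = c x"
      using fun_cong[OF Lc, of x] x by (simp add: L_def rs_def)
  qed
qed

definition dsum :: "(nat \<Rightarrow> real) \<Rightarrow> nat \<Rightarrow> real" where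
  "dsum \<gamma> T = (\<Sum>s\<in>{1..T}. \<Sum>t\<in>{1..T}. \<gamma> (if s \<le> t then t - s else s - t))"

lemma dsum_rec: "dsum \<gamma> (Suc T) = dsum \<gamma> T + \<gamma> 0 + 2 * (\<Sum>k\<in>{1..T}. \<gamma> k)"
proof -
  define G where "G s t = \<gamma> (if s \<le> t then t - s else s - t)" for s t :: nat
  have ins: "{1..Suc T} = insert (Suc T) {1..T}" by auto
  have r1: "(\<Sum>t\<in>{1..T}. G (Suc T) t) = (\<Sum>k\<in>{1..T}. \<gamma> k)"
  proof -
    have "(\<Sum>t\<in>{1..T}. G (Suc T) t) = (\<Sum>t\<in>{1..T}. \<gamma> (Suc T - t))"
      by (rule sum.cong) (auto simp: G_def)
    also have "\<dots> = (\<Sum>k\<in>{1..T}. \<gamma> k)"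
      by (rule sum.reindex_bij_witness[where i="\<lambda>k. Suc T - k" and j="\<lambda>t. Suc T - t"]) auto
    finally show ?thesis .
  qed
  have r2: "(\<Sum>s\<in>{1..T}. G s (Suc T)) = (\<Sum>k\<in>{1..T}. \<gamma> k)"
  proof -
    have "(\<Sum>s\<in>{1..T}. G s (Suc T)) = (\<Sum>t\<in>{1..T}. G (Suc T) t)"
      by (rule sum.cong) (auto simp: G_def)
    then show ?thesis using r1 by simp
  qed
  have "dsum \<gamma> (Suc T) = (\<Sum>s\<in>{1..Suc T}. \<Sum>t\<in>{1..Suc T}. G s t)" by (simp add: dsum_def G_def)
  also have "\<dots> = (G (Suc T) (Suc T) + (\<Sum>t\<in>{1..T}. G (Suc T) t))
       + (\<Sum>s\<in>{1..T}. G s (Suc T) + (\<Sum>t\<in>{1..T}. G s t))"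
    unfolding ins by (simp add: sum.insert)
  also have "\<dots> = \<gamma> 0 + (\<Sum>k\<in>{1..T}. \<gamma> k) + (\<Sum>k\<in>{1..T}. \<gamma> k) + dsum \<gamma> T"
    by (simp only: sum.distrib r1 r2) (simp add: dsum_def G_def)
  finally show ?thesis by simp
qed

lemma tele: "(\<Sum>k\<in>{1..T}. (\<beta> k - \<beta> (Suc k) :: real)) = \<beta> 1 - \<beta> (Suc T)"
  by (induction T) (auto simp: atLeastAtMostSuc_conv)

lemma tele2:
  assumes "\<And>k. \<gamma> k = \<beta> k - \<beta> (Suc k) + (\<kappa>::real)"
  shows "(\<Sum>k\<in>{1..T}. \<gamma> k) = \<beta> 1 - \<beta> (Suc T) + real T * \<kappa>"
proof -
  have "(\<Sum>k\<in>{1..T}. \<gamma> k) = (\<Sum>k\<in>{1..T}. (\<beta> k - \<beta> (Suc k))) + (\<Sum>k\<in>{1..T}. \<kappa>)"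
    by (simp add: assms sum.distrib)
  then show ?thesis using tele[of \<beta> T] by simp
qed

lemma dsum_closed:
  assumes "\<And>k. \<gamma> k = \<beta> k - \<beta> (Suc k) + (\<kappa>::real)"
  shows "dsum \<gamma> T = real T * (\<beta> 0 + \<beta> 1) - 2 * (\<Sum>d\<in>{1..T}. \<beta> d) + (real T)^2 * \<kappa>"
proof (induction T)
  case 0 then show ?case by (simp add: dsum_def)
next
  case (Suc T)
  have s: "(\<Sum>d\<in>{1..Suc T}. \<beta> d) = (\<Sum>d\<in>{1..T}. \<beta> d) + \<beta> (Suc T)"
    by (simp add: atLeastAtMostSuc_conv)
  show ?case
    using dsum_rec[of \<gamma> T] Suc tele2[of \<gamma> \<beta> \<kappa> T, OF assms] assms[of 0] s
    by (simp add: algebra_simps power2_eq_square)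
qed

locale schain =
  fixes S :: "'s set" and P :: "'s \<Rightarrow> 's \<Rightarrow> real" and mu :: "'s \<Rightarrow> real"
  assumes fin: "finite S"
    and Pn: "\<And>x y. x \<in> S \<Longrightarrow> y \<in> S \<Longrightarrow> P x y \<ge> 0"
    and Ps: "\<And>x. x \<in> S \<Longrightarrow> (\<Sum>y\<in>S. P x y) = 1"
    and mun: "\<And>x. x \<in> S \<Longrightarrow> mu x \<ge> 0"
    and mus: "(\<Sum>x\<in>S. mu x) = 1"
    and stat: "\<And>y. y \<in> S \<Longrightarrow> (\<Sum>x\<in>S. mu x * P x y) = mu y"
begin

abbreviation A where "A \<equiv> app S P"

definition Ak :: "nat \<Rightarrow> ('s \<Rightarrow> real) \<Rightarrow> 's \<Rightarrow> real" where
  "Ak n f x = (\<Sum>y\<in>S. kpow S P n x y * f y)"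

definition ip :: "('s \<Rightarrow> real) \<Rightarrow> ('s \<Rightarrow> real) \<Rightarrow> real" where
  "ip f g = (\<Sum>x\<in>S. mu x * f x * g x)"

lemma A_cong: "(\<And>y. y \<in> S \<Longrightarrow> f y = g y) \<Longrightarrow> A f x = A g x"
  by (simp add: app_def)

lemma Ak_cong: "(\<And>y. y \<in> S \<Longrightarrow> f y = g y) \<Longrightarrow> Ak n f x = Ak n g x"
  by (simp add: Ak_def)

lemma ip_cong: "(\<And>y. y \<in> S \<Longrightarrow> f y = f' y) \<Longrightarrow> (\<And>y. y \<in> S \<Longrightarrow> g y = g' y) \<Longrightarrow> ip f g = ip f' g'"
  by (simp add: ip_def)

lemma Ak_0: "x \<in> S \<Longrightarrow> Ak 0 f x = f x"
proof -
  assume x: "x \<in> S"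
  have "Ak 0 f x = (\<Sum>y\<in>S. if y = x then f y else 0)" unfolding Ak_def by (rule sum.cong) auto
  also have "\<dots> = f x" using x fin by (simp add: sum.delta)
  finally show ?thesis .
qed

lemma Ak_Suc: "Ak (Suc n) f x = Ak n (A f) x"
proof -
  have "Ak (Suc n) f x = (\<Sum>y\<in>S. (\<Sum>z\<in>S. kpow S P n x z * P z y) * f y)"
    by (simp add: Ak_def kcomp_def)
  also have "\<dots> = (\<Sum>y\<in>S. \<Sum>z\<in>S. kpow S P n x z * (P z y * f y))"
    by (simp add: sum_distrib_right mult.assoc)
  also have "\<dots> = (\<Sum>z\<in>S. \<Sum>y\<in>S. kpow S P n x z * (P z y * f y))"
    by (rule sum.swap)
  also have "\<dots> = (\<Sum>z\<in>S. kpow S P n x z * (\<Sum>y\<in>S. P z y * f y))"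
    by (simp add: sum_distrib_left)
  finally show ?thesis by (simp add: Ak_def app_def)
qed

lemma A_lin: "A (\<lambda>x. a * f x + b * g x) x = a * A f x + b * A g x"
  by (simp add: app_def sum.distrib sum_distrib_left algebra_simps)

lemma A_diff: "A (\<lambda>x. f x - g x) x = A f x - A g x"
  by (simp add: app_def sum_subtractf algebra_simps)

lemma A_add: "A (\<lambda>x. f x + g x) x = A f x + A g x"
  by (simp add: app_def sum.distrib algebra_simps)

lemma A_const: "x \<in> S \<Longrightarrow> A (\<lambda>_. k) x = k"
  using Ps by (simp add: app_def sum_distrib_right[symmetric])

lemma Ak_lin: "Ak n (\<lambda>x. a * f x + b * g x) x = a * Ak n f x + b * Ak n g x"
  by (simp add: Ak_def sum.distrib sum_distrib_left algebra_simps)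

lemma Ak_diff: "Ak n (\<lambda>x. f x - g x) x = Ak n f x - Ak n g x"
  by (simp add: Ak_def sum_subtractf algebra_simps)

lemma Ak_add: "Ak n (\<lambda>x. f x + g x) x = Ak n f x + Ak n g x"
  by (simp add: Ak_def sum.distrib algebra_simps)

lemma Ak_harm:
  assumes "\<And>x. x \<in> S \<Longrightarrow> A c x = c x"
  shows "x \<in> S \<Longrightarrow> Ak n c x = c x"
proof (induction n arbitrary: x)
  case 0 then show ?case by (simp add: Ak_0)
next
  case (Suc n)
  have "Ak (Suc n) c x = Ak n (A c) x" by (rule Ak_Suc)
  also have "\<dots> = Ak n c x" by (rule Ak_cong) (simp add: assms)
  finally show ?case using Suc by simp
qed

lemma Ak_const: "x \<in> S \<Longrightarrow> Ak n (\<lambda>_. k) x = k"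
  by (rule Ak_harm) (simp add: A_const)

lemma A_bound: "(\<And>y. y \<in> S \<Longrightarrow> \<bar>f y\<bar> \<le> M) \<Longrightarrow> x \<in> S \<Longrightarrow> \<bar>A f x\<bar> \<le> M"
  by (rule app_bound[OF Pn Ps])

lemma Ak_bound: "(\<And>y. y \<in> S \<Longrightarrow> \<bar>f y\<bar> \<le> M) \<Longrightarrow> x \<in> S \<Longrightarrow> \<bar>Ak n f x\<bar> \<le> M"
proof (induction n arbitrary: f x)
  case 0 then show ?case by (simp add: Ak_0)
next
  case (Suc n)
  have "\<bar>Ak n (A f) x\<bar> \<le> M"
    by (rule Suc.IH) (use Suc.prems A_bound in auto)
  then show ?case by (simp only: Ak_Suc)
qed

lemma sum_A: "(\<Sum>x\<in>S. mu x * A f x) = (\<Sum>x\<in>S. mu x * f x)"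
proof -
  have "(\<Sum>x\<in>S. mu x * A f x) = (\<Sum>x\<in>S. \<Sum>y\<in>S. mu x * P x y * f y)"
    by (simp add: app_def sum_distrib_left mult.assoc)
  also have "\<dots> = (\<Sum>y\<in>S. \<Sum>x\<in>S. mu x * P x y * f y)" by (rule sum.swap)
  also have "\<dots> = (\<Sum>y\<in>S. (\<Sum>x\<in>S. mu x * P x y) * f y)"
    by (simp add: sum_distrib_right)
  also have "\<dots> = (\<Sum>y\<in>S. mu y * f y)" by (rule sum.cong) (auto simp: stat)
  finally show ?thesis .
qed

lemma sum_Ak: "(\<Sum>x\<in>S. mu x * Ak n f x) = (\<Sum>x\<in>S. mu x * f x)"
proof (induction n arbitrary: f)
  case 0 then show ?case by (intro sum.cong) (auto simp: Ak_0)
next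
  case (Suc n)
  have "(\<Sum>x\<in>S. mu x * Ak (Suc n) f x) = (\<Sum>x\<in>S. mu x * Ak n (A f) x)"
    by (simp add: Ak_Suc)
  also have "\<dots> = (\<Sum>x\<in>S. mu x * A f x)" by (rule Suc.IH)
  also have "\<dots> = (\<Sum>x\<in>S. mu x * f x)" by (rule sum_A)
  finally show ?case .
qed

lemma law: "y \<in> S \<Longrightarrow> law_at S mu P t y = mu y"
proof (induction t arbitrary: y)
  case 0
  have "law_at S mu P 0 y = (\<Sum>x\<in>S. if x = y then mu x else 0)" unfolding law_at_def by (rule sum.cong) auto
  then show ?case using 0 fin by (simp add: sum.delta)
next
  case (Suc t)
  have "law_at S mu P (Suc t) y = (\<Sum>x\<in>S. \<Sum>z\<in>S. mu x * kpow S P t x z * P z y)"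
    by (simp add: law_at_def kcomp_def sum_distrib_left mult.assoc)
  also have "\<dots> = (\<Sum>z\<in>S. \<Sum>x\<in>S. mu x * kpow S P t x z * P z y)" by (rule sum.swap)
  also have "\<dots> = (\<Sum>z\<in>S. (\<Sum>x\<in>S. mu x * kpow S P t x z) * P z y)"
    by (simp add: sum_distrib_right)
  also have "\<dots> = (\<Sum>z\<in>S. mu z * P z y)"
    by (rule sum.cong) (auto simp: Suc.IH[unfolded law_at_def])
  finally show ?case using stat Suc.prems by simp
qed

lemma dirichlet: "ip f f - ip f (A f) = (\<Sum>x\<in>S. \<Sum>y\<in>S. mu x * P x y * (f x - f y)^2) / 2"
proof -
  have e1: "(\<Sum>x\<in>S. \<Sum>y\<in>S. mu x * P x y * (f y)^2) = ip f f"
  proof -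
    have "(\<Sum>x\<in>S. \<Sum>y\<in>S. mu x * P x y * (f y)^2) = (\<Sum>y\<in>S. \<Sum>x\<in>S. mu x * P x y * (f y)^2)"
      by (rule sum.swap)
    also have "\<dots> = (\<Sum>y\<in>S. (\<Sum>x\<in>S. mu x * P x y) * (f y)^2)"
      by (simp add: sum_distrib_right)
    also have "\<dots> = ip f f" unfolding ip_def
      by (rule sum.cong) (auto simp: stat power2_eq_square)
    finally show ?thesis .
  qed
  have e2: "(\<Sum>x\<in>S. \<Sum>y\<in>S. mu x * P x y * (f x)^2) = ip f f"
    unfolding ip_def
    by (rule sum.cong) (auto simp: sum_distrib_right[symmetric] sum_distrib_left[symmetric] Ps power2_eq_square mult.assoc
                              simp del: sum_distrib_left)
  have e3: "(\<Sum>x\<in>S. \<Sum>y\<in>S. mu x * P x y * (f x * f y)) = ip f (A f)"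
    unfolding ip_def app_def by (simp add: sum_distrib_left algebra_simps)
  have "(\<Sum>x\<in>S. \<Sum>y\<in>S. mu x * P x y * (f x - f y)^2)
      = (\<Sum>x\<in>S. \<Sum>y\<in>S. mu x * P x y * (f x)^2) + (\<Sum>x\<in>S. \<Sum>y\<in>S. mu x * P x y * (f y)^2)
        - 2 * (\<Sum>x\<in>S. \<Sum>y\<in>S. mu x * P x y * (f x * f y))"
    by (simp add: power2_diff sum.distrib sum_subtractf sum_distrib_left algebra_simps)
  then show ?thesis using e1 e2 e3 by simp
qed

lemma dirichlet_nonneg: "ip f (A f) \<le> ip f f"
proof -
  have "0 \<le> (\<Sum>x\<in>S. \<Sum>y\<in>S. mu x * P x y * (f x - f y)^2)"
    by (intro sum_nonneg) (auto simp: mun Pn)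
  then show ?thesis using dirichlet[of f] by simp
qed

lemma harm_const:
  assumes h: "\<And>x. x \<in> S \<Longrightarrow> A c x = c x" and x: "x \<in> S" and y: "y \<in> S"
  shows "mu x * P x y * c x = mu x * P x y * c y"
proof -
  have "ip c (A c) = ip c c" unfolding ip_def by (rule sum.cong) (auto simp: h)
  hence z: "(\<Sum>x\<in>S. \<Sum>y\<in>S. mu x * P x y * (c x - c y)^2) = 0" using dirichlet[of c] by simp
  have "\<forall>x\<in>S. (\<Sum>y\<in>S. mu x * P x y * (c x - c y)^2) = 0"
    using z fin by (subst (asm) sum_nonneg_eq_0_iff) (auto intro!: sum_nonneg simp: mun Pn)
  hence inner: "(\<Sum>y\<in>S. mu x * P x y * (c x - c y)^2) = 0" using x by blast
  have "\<forall>y\<in>S. mu x * P x y * (c x - c y)^2 = 0"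
    using inner fin sum_nonneg_eq_0_iff[of S "\<lambda>y. mu x * P x y * (c x - c y)^2"] x
    by (auto simp: mun Pn)
  hence "mu x * P x y * (c x - c y)^2 = 0" using y by blast
  thus ?thesis by (auto simp: algebra_simps)
qed

lemma harm_ip:
  assumes h: "\<And>x. x \<in> S \<Longrightarrow> A c x = c x"
  shows "ip (A f) c = ip f c"
proof -
  have "ip (A f) c = (\<Sum>x\<in>S. \<Sum>y\<in>S. mu x * P x y * c x * f y)"
    unfolding ip_def app_def by (simp add: sum_distrib_left sum_distrib_right algebra_simps)
  also have "\<dots> = (\<Sum>x\<in>S. \<Sum>y\<in>S. mu x * P x y * c y * f y)"
    using harm_const[OF h] by (intro sum.cong refl) simp
  also have "\<dots> = (\<Sum>y\<in>S. \<Sum>x\<in>S. mu x * P x y * c y * f y)"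
    by (rule sum.swap)
  also have "\<dots> = (\<Sum>y\<in>S. (\<Sum>x\<in>S. mu x * P x y) * c y * f y)"
    by (simp add: sum_distrib_right)
  also have "\<dots> = ip f c" unfolding ip_def by (rule sum.cong) (auto simp: stat)
  finally show ?thesis .
qed

end

context schain
begin

lemma ip_sym: "ip f g = ip g f" by (simp add: ip_def algebra_simps)

lemma ip_diff2: "ip f (\<lambda>x. u x - v x) = ip f u - ip f v"
  by (simp add: ip_def algebra_simps sum_subtractf)
lemma ip_add2: "ip f (\<lambda>x. u x + v x) = ip f u + ip f v"
  by (simp add: ip_def algebra_simps sum.distrib)
lemma ip_diff1: "ip (\<lambda>x. u x - v x) f = ip u f - ip v f"
  by (simp add: ip_def algebra_simps sum_subtractf)
lemma ip_add1: "ip (\<lambda>x. u x + v x) f = ip u f + ip v f"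
  by (simp add: ip_def algebra_simps sum.distrib)

lemma ip_self_nonneg: "ip f f \<ge> 0"
  unfolding ip_def by (intro sum_nonneg) (auto simp: mun mult.assoc)

lemma ip_null:
  assumes "ip c c = 0" shows "ip c f = 0"
proof -
  have "\<forall>x\<in>S. mu x * c x * c x = 0"
    using assms fin unfolding ip_def
    by (subst (asm) sum_nonneg_eq_0_iff) (auto simp: mun mult.assoc)
  hence "\<forall>x\<in>S. mu x * c x = 0" using mun by (auto simp: mult.assoc)
  thus ?thesis unfolding ip_def by (intro sum.neutral) auto
qed

lemma prod_mom_eq:
  "prod_mom S mu P g s t = ip g (Ak (if s \<le> t then t - s else s - t) g)"
proof -
  have *: "prod_mom0 S mu P g a b = ip g (Ak (b - a) g)" for a b
    unfolding prod_mom0_def ip_def Ak_def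
    by (rule sum.cong) (auto simp: law sum_distrib_left mult.assoc)
  show ?thesis by (simp add: prod_mom_def * )
qed

definition mg where "mg g = (\<Sum>x\<in>S. mu x * g x)"

lemma mean_eq: "mean_at S mu P g t = mg g"
  unfolding mean_at_def mg_def by (rule sum.cong) (auto simp: law)

lemma gamma_center:
  "ip g (Ak k g) - (mg g)^2 = ip (\<lambda>x. g x - mg g) (Ak k (\<lambda>x. g x - mg g))"
proof -
  let ?m = "mg g"
  have ak: "Ak k (\<lambda>x. g x - ?m) x = Ak k g x - ?m" if "x \<in> S" for x
    using Ak_diff[of k g "\<lambda>_. ?m" x] Ak_const[OF that, of k ?m] by simp
  have "ip (\<lambda>x. g x - ?m) (Ak k (\<lambda>x. g x - ?m)) = ip (\<lambda>x. g x - ?m) (\<lambda>x. Ak k g x - ?m)"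
    by (rule ip_cong) (auto simp: ak)
  also have "\<dots> = (\<Sum>x\<in>S. mu x * g x * Ak k g x) - ?m * (\<Sum>x\<in>S. mu x * Ak k g x)
       - ?m * (\<Sum>x\<in>S. mu x * g x) + ?m * ?m * (\<Sum>x\<in>S. mu x)"
    unfolding ip_def by (simp add: algebra_simps sum.distrib sum_subtractf sum_distrib_left sum_distrib_right)
  also have "\<dots> = ip g (Ak k g) - ?m^2"
    by (simp add: sum_Ak mus ip_def mg_def power2_eq_square)
  finally show ?thesis by simp
qed

lemma var_eq:
  assumes T: "T > 0"
  shows "real T * var_avg S mu P g T = dsum (\<lambda>k. ip (\<lambda>x. g x - mg g) (Ak k (\<lambda>x. g x - mg g))) T / real T"
proof -
  let ?m = "mg g"
  let ?d = "\<lambda>s t. (if s \<le> t then t - s else s - t :: nat)"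
  have "(\<Sum>s\<in>{1..T}. \<Sum>t\<in>{1..T}. prod_mom S mu P g s t) - (\<Sum>t\<in>{1..T}. mean_at S mu P g t)^2
      = (\<Sum>s\<in>{1..T}. \<Sum>t\<in>{1..T}. ip g (Ak (?d s t) g) - ?m^2)"
    by (simp add: prod_mom_eq mean_eq sum_subtractf power2_eq_square algebra_simps)
  also have "\<dots> = dsum (\<lambda>k. ip (\<lambda>x. g x - mg g) (Ak k (\<lambda>x. g x - mg g))) T"
    unfolding dsum_def gamma_center by simp
  finally have e: "(\<Sum>s\<in>{1..T}. \<Sum>t\<in>{1..T}. prod_mom S mu P g s t) - (\<Sum>t\<in>{1..T}. mean_at S mu P g t)^2
      = dsum (\<lambda>k. ip (\<lambda>x. g x - mg g) (Ak k (\<lambda>x. g x - mg g))) T" .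
  show ?thesis unfolding var_avg_def e using T by (simp add: power2_eq_square field_simps)
qed

lemma asym:
  fixes g h c :: "'s \<Rightarrow> real"
  defines "gb \<equiv> \<lambda>x. g x - mg g"
  assumes dec: "\<And>x. x \<in> S \<Longrightarrow> gb x = h x - A h x + c x"
    and hc: "\<And>x. x \<in> S \<Longrightarrow> A c x = c x"
  shows "asym_var S mu P g = (if ip c c = 0 then ereal (2 * ip gb h - ip gb gb) else \<infinity>)"
proof -
  obtain h2 c2 where dec2: "\<forall>x\<in>S. h x = h2 x - A h2 x + c2 x" and hc2: "\<forall>x\<in>S. A c2 x = c2 x"
  proof -
    have "\<exists>h2 c2. (\<forall>x\<in>S. h x = h2 x - A h2 x + c2 x) \<and> (\<forall>x\<in>S. A c2 x = c2 x)"
      by (rule decomp[OF fin]) (simp_all add: Pn Ps)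
    thus ?thesis using that by blast
  qed
  define \<beta> where "\<beta> k = ip gb (Ak k h)" for k
  define \<delta> where "\<delta> k = ip gb (Ak k h2)" for k
  define \<kappa> where "\<kappa> = ip gb c"
  define \<epsilon> where "\<epsilon> = ip gb c2"
  have gam: "ip gb (Ak k gb) = \<beta> k - \<beta> (Suc k) + \<kappa>" for k
  proof -
    have "Ak k gb x = Ak k h x - Ak (Suc k) h x + c x" if x: "x \<in> S" for x
    proof -
      have "Ak k gb x = Ak k (\<lambda>x. (h x - A h x) + c x) x" by (rule Ak_cong) (simp add: dec)
      also have "\<dots> = Ak k h x - Ak k (A h) x + Ak k c x" by (simp add: Ak_add Ak_diff)
      also have "\<dots> = Ak k h x - Ak (Suc k) h x + c x" by (simp add: Ak_Suc Ak_harm[OF hc x])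
      finally show ?thesis .
    qed
    hence "ip gb (Ak k gb) = ip gb (\<lambda>x. (Ak k h x - Ak (Suc k) h x) + c x)" by (intro ip_cong) auto
    also have "\<dots> = \<beta> k - \<beta> (Suc k) + \<kappa>" by (simp add: ip_add2 ip_diff2 \<beta>_def \<kappa>_def)
    finally show ?thesis .
  qed
  have bet: "\<beta> k = \<delta> k - \<delta> (Suc k) + \<epsilon>" for k
  proof -
    have "Ak k h x = Ak k h2 x - Ak (Suc k) h2 x + c2 x" if x: "x \<in> S" for x
    proof -
      have "Ak k h x = Ak k (\<lambda>x. (h2 x - A h2 x) + c2 x) x" by (rule Ak_cong) (simp add: dec2)
      also have "\<dots> = Ak k h2 x - Ak k (A h2) x + Ak k c2 x" by (simp add: Ak_add Ak_diff)
      also have "\<dots> = Ak k h2 x - Ak (Suc k) h2 x + c2 x" using hc2 x by (simp add: Ak_Suc Ak_harm)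
      finally show ?thesis .
    qed
    hence "ip gb (Ak k h) = ip gb (\<lambda>x. (Ak k h2 x - Ak (Suc k) h2 x) + c2 x)" by (intro ip_cong) auto
    also have "\<dots> = \<delta> k - \<delta> (Suc k) + \<epsilon>" by (simp add: ip_add2 ip_diff2 \<delta>_def \<epsilon>_def)
    finally show ?thesis by (simp add: \<beta>_def)
  qed
  have gbip: "ip gb f = ip h f - ip (A h) f + ip c f" for f
  proof -
    have "ip gb f = ip (\<lambda>x. (h x - A h x) + c x) f" by (rule ip_cong) (auto simp: dec)
    thus ?thesis by (simp add: ip_add1 ip_diff1)
  qed
  have kap: "\<kappa> = ip c c" unfolding \<kappa>_def gbip using harm_ip[OF hc, of h] ip_sym by simp
  have eps: "\<epsilon> = ip c c2" unfolding \<epsilon>_def gbip using harm_ip[of c2 h] hc2 by simp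
  define M where "M = (\<Sum>y\<in>S. \<bar>h2 y\<bar>)"
  define B where "B = (\<Sum>x\<in>S. mu x * \<bar>gb x\<bar> * M)"
  have hM: "\<bar>h2 y\<bar> \<le> M" if "y \<in> S" for y
    unfolding M_def using fin that by (intro member_le_sum) auto
  have dB: "\<bar>\<delta> k\<bar> \<le> B" for k
  proof -
    have "\<bar>\<delta> k\<bar> \<le> (\<Sum>x\<in>S. \<bar>mu x * gb x * Ak k h2 x\<bar>)" unfolding \<delta>_def ip_def by (rule sum_abs)
    also have "\<dots> \<le> B" unfolding B_def
    proof (rule sum_mono)
      fix x assume x: "x \<in> S"
      have "\<bar>Ak k h2 x\<bar> \<le> M" using Ak_bound[OF hM x] by simp
      thus "\<bar>mu x * gb x * Ak k h2 x\<bar> \<le> mu x * \<bar>gb x\<bar> * M"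
        using mun[OF x] by (auto simp: abs_mult intro!: mult_left_mono)
    qed
    finally show ?thesis .
  qed
  have B0: "B \<ge> 0" using dB[of 0] by simp
  define C where "C = \<beta> 0 + \<beta> 1 - 2 * \<epsilon>"
  have aT: "real T * var_avg S mu P g T = C + real T * \<kappa> - 2 * (\<delta> 1 - \<delta> (Suc T)) / real T"
    if T: "T > 0" for T
  proof -
    have "real T * var_avg S mu P g T = dsum (\<lambda>k. ip gb (Ak k gb)) T / real T"
      using var_eq[OF T, of g] by (simp add: gb_def)
    also have "dsum (\<lambda>k. ip gb (Ak k gb)) T
        = real T * (\<beta> 0 + \<beta> 1) - 2 * (\<Sum>d\<in>{1..T}. \<beta> d) + (real T)^2 * \<kappa>"
      by (rule dsum_closed) (rule gam)
    also have "(\<Sum>d\<in>{1..T}. \<beta> d) = \<delta> 1 - \<delta> (Suc T) + real T * \<epsilon>"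
      by (rule tele2) (rule bet)
    finally show ?thesis using T unfolding C_def by (simp add: field_simps power2_eq_square)
  qed
  have errb: "\<bar>2 * (\<delta> 1 - \<delta> (Suc T)) / real T\<bar> \<le> 4 * B / real T" if "T > 0" for T
  proof -
    have "\<bar>2 * (\<delta> 1 - \<delta> (Suc T))\<bar> \<le> 4 * B" using dB[of 1] dB[of "Suc T"] abs_triangle_ineq4[of "\<delta> 1" "\<delta> (Suc T)"] by (simp add: abs_mult)
    thus ?thesis using that by (simp add: divide_right_mono)
  qed
  show ?thesis
  proof (cases "ip c c = 0")
    case True
    have e0: "\<epsilon> = 0" using eps ip_null[OF True] by simp
    have k0: "\<kappa> = 0" using kap True by simp
    have lim0: "(\<lambda>T. 2 * (\<delta> 1 - \<delta> (Suc T)) / real T) \<longlonglongrightarrow> 0"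
    proof (rule Lim_null_comparison)
      show "\<forall>\<^sub>F T in sequentially. norm (2 * (\<delta> 1 - \<delta> (Suc T)) / real T) \<le> 4 * B / real T"
        using errb by (intro eventually_sequentiallyI[of 1]) auto
      show "(\<lambda>T. 4 * B / real T) \<longlonglongrightarrow> 0"
        by (rule lim_const_over_n)
    qed
    have l1: "(\<lambda>T. C - 2 * (\<delta> 1 - \<delta> (Suc T)) / real T) \<longlonglongrightarrow> C"
      using tendsto_diff[OF tendsto_const lim0, of C] by simp
    have ev: "\<forall>\<^sub>F T in sequentially. C - 2 * (\<delta> 1 - \<delta> (Suc T)) / real T = real T * var_avg S mu P g T"
      using aT k0 by (intro eventually_sequentiallyI[of 1]) auto
    have "(\<lambda>T. real T * var_avg S mu P g T) \<longlonglongrightarrow> C"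
      by (rule Lim_transform_eventually[OF l1 ev])
    hence "(\<lambda>T. ereal (real T * var_avg S mu P g T)) \<longlonglongrightarrow> ereal C"
      by (rule tendsto_ereal)
    hence "asym_var S mu P g = ereal C" unfolding asym_var_def by (rule limI)
    moreover have "C = 2 * ip gb h - ip gb gb"
    proof -
      have b0: "\<beta> 0 = ip gb h" unfolding \<beta>_def by (rule ip_cong) (auto simp: Ak_0)
      have "\<beta> 1 = ip gb (\<lambda>x. (h x - gb x) + c x)" unfolding \<beta>_def
        by (rule ip_cong) (auto simp: Ak_Suc Ak_0 dec)
      also have "\<dots> = ip gb h - ip gb gb + \<kappa>" by (simp add: ip_add2 ip_diff2 \<kappa>_def)
      finally show ?thesis using b0 e0 k0 by (simp add: C_def)
    qed
    ultimately show ?thesis using True by simp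
  next
    case False
    have kpos: "\<kappa> > 0" using kap False ip_self_nonneg[of c] by simp
    have "filterlim (\<lambda>T. real T * var_avg S mu P g T) at_top sequentially"
      unfolding filterlim_at_top
    proof
      fix Z :: real
      obtain N :: nat where N: "(\<bar>Z\<bar> + \<bar>C\<bar> + 4 * B) / \<kappa> < real N" using reals_Archimedean2 by blast
      show "\<forall>\<^sub>F T in sequentially. Z \<le> real T * var_avg S mu P g T"
      proof (rule eventually_sequentiallyI[of "Suc N"])
        fix T assume T: "Suc N \<le> T"
        hence T0: "T > 0" and TN: "real N \<le> real T" by auto
        have "\<bar>Z\<bar> + \<bar>C\<bar> + 4 * B < real N * \<kappa>" using N kpos by (simp add: divide_less_eq)
        also have "\<dots> \<le> real T * \<kappa>" using TN kpos by (simp add: mult_right_mono)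
        finally have 1: "\<bar>Z\<bar> + \<bar>C\<bar> + 4 * B < real T * \<kappa>" .
        have "B \<le> B * real T" using T0 B0 by (simp add: mult_le_cancel_left1)
        hence "4 * B / real T \<le> 4 * B" using T0 B0 by (simp add: divide_le_eq)
        hence 2: "\<bar>2 * (\<delta> 1 - \<delta> (Suc T)) / real T\<bar> \<le> 4 * B" using errb[OF T0] by linarith
        define e where "e = 2 * (\<delta> 1 - \<delta> (Suc T)) / real T"
        have 3: "e \<le> 4 * B" using 2 unfolding e_def by (simp only: abs_le_iff)
        have 4: "Z \<le> \<bar>Z\<bar>" "- C \<le> \<bar>C\<bar>" by auto
        have "real T * var_avg S mu P g T = C + real T * \<kappa> - e" using aT[OF T0] unfolding e_def .
        thus "Z \<le> real T * var_avg S mu P g T" using 1 3 4 by linarith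
      qed
    qed
    hence "(\<lambda>T. ereal (real T * var_avg S mu P g T)) \<longlonglongrightarrow> \<infinity>"
      by (simp add: tendsto_PInfty_eq_at_top)
    hence "asym_var S mu P g = \<infinity>" unfolding asym_var_def by (rule limI)
    thus ?thesis using False by simp
  qed
qed

end

definition fl :: "nat \<Rightarrow> (nat \<Rightarrow> int) \<Rightarrow> nat \<Rightarrow> int" where
  "fl d v = v(d := - v d)"

definition rho :: "nat \<Rightarrow> (nat \<Rightarrow> int) \<Rightarrow> nat \<Rightarrow> int" where
  "rho D v = (\<lambda>j. if j \<in> {1..D} then - v j else v j)"

lemma vels_pm: "v \<in> vels D \<Longrightarrow> d \<in> {1..D} \<Longrightarrow> v d = 1 \<or> v d = -1"
  by (auto simp: vels_def)

lemma vels_out: "v \<in> vels D \<Longrightarrow> d \<notin> {1..D} \<Longrightarrow> v d = 1"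
  by (auto simp: vels_def)

lemma fl_vels: "v \<in> vels D \<Longrightarrow> d \<in> {1..D} \<Longrightarrow> fl d v \<in> vels D"
  by (auto simp: vels_def fl_def)

lemma fl_fl[simp]: "fl d (fl d v) = v"
  by (auto simp: fl_def fun_eq_iff)

lemma fl_at[simp]: "fl d v d = - v d"
  by (simp add: fl_def)

lemma fl_ne: "v \<in> vels D \<Longrightarrow> d \<in> {1..D} \<Longrightarrow> fl d v \<noteq> v"
proof
  assume v: "v \<in> vels D" "d \<in> {1..D}" and "fl d v = v"
  hence "v d = - v d" by (metis fl_at)
  thus False using vels_pm[OF v] by auto
qed

lemma fl_iff: "((\<forall>j. j \<noteq> d \<longrightarrow> v j = v' j) \<and> v' d = - v d) \<longleftrightarrow> v' = fl d v"
  by (auto simp: fl_def fun_eq_iff)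

lemma rho_vels: "v \<in> vels D \<Longrightarrow> rho D v \<in> vels D"
  by (auto simp: vels_def rho_def)

lemma rho_rho[simp]: "rho D (rho D v) = v"
  by (auto simp: rho_def fun_eq_iff)

lemma rho_at: "d \<in> {1..D} \<Longrightarrow> rho D v d = - v d"
  by (simp add: rho_def)

lemma rho_fl: "d \<in> {1..D} \<Longrightarrow> rho D (fl d v) = fl d (rho D v)"
  by (auto simp: rho_def fl_def fun_eq_iff)

lemma vels_image: "vels D = (\<lambda>B j. if j \<in> B then -1 else 1) ` Pow {1..D}"
proof
  show "vels D \<subseteq> (\<lambda>B j. if j \<in> B then -1 else 1) ` Pow {1..D}"
  proof
    fix v assume v: "v \<in> vels D"
    have "v = (\<lambda>j. if j \<in> {j\<in>{1..D}. v j = -1} then -1 else 1)"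
      using v by (auto simp: vels_def fun_eq_iff)
    thus "v \<in> (\<lambda>B j. if j \<in> B then -1 else 1) ` Pow {1..D}" by blast
  qed
  show "(\<lambda>B j. if j \<in> B then -1 else 1) ` Pow {1..D} \<subseteq> vels D"
    by (auto simp: vels_def)
qed

lemma vels_finite: "finite (vels D)"
  by (simp add: vels_image)

lemma vels_card: "card (vels D) = 2 ^ D"
proof -
  have "inj_on (\<lambda>B j. if j \<in> B then -1 else (1::int)) (Pow {1..D})"
  proof (rule inj_onI)
    fix A B assume "A \<in> Pow {1..D}" "B \<in> Pow {1..D}"
      and e: "(\<lambda>j. if j \<in> A then -1 else (1::int)) = (\<lambda>j. if j \<in> B then -1 else 1)"
    show "A = B"
    proof (rule set_eqI)
      fix j show "j \<in> A \<longleftrightarrow> j \<in> B" using fun_cong[OF e, of j] by (auto split: if_splits)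
    qed
  qed
  hence "card (vels D) = card (Pow {1..D::nat})" by (simp add: vels_image card_image)
  also have "\<dots> = 2 ^ D" by (simp add: card_Pow)
  finally show ?thesis .
qed

lemma Fd_eq:
  assumes "v \<in> vels D" "d \<in> {1..D}"
  shows "Fd \<alpha> d (c, v) (c', v') = (if c = c' then (1 - \<alpha>) * (if v' = v then 1 else 0) + \<alpha> * (if v' = fl d v then 1 else 0) else 0)"
  unfolding Fd_def by (simp add: fl_iff eq_commute[of v v'])

lemma Klift_eq:
  assumes v: "v \<in> vels D" "v' \<in> vels D" and d: "d \<in> {1..D}"
  shows "Klift K d (c, v) (c', v') = (if c \<noteq> c' then (if v' = v then K d (v d) c c' else 0)
                                       else (if v' = fl d v then K d (v d) c c else 0))"
proof -
  have pm: "v d = 1 \<or> v d = -1" using vels_pm[OF v(1) d] .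
  show ?thesis
  proof (cases "\<forall>j. j \<noteq> d \<longrightarrow> v j = v' j")
    case True
    have e1: "v' = v \<longleftrightarrow> v d = v' d"
    proof
      assume "v d = v' d" thus "v' = v" using True by (metis ext)
    qed simp
    have e2: "v' = fl d v \<longleftrightarrow> v d = - v' d" using True by (auto simp: fun_eq_iff fl_def)
    show ?thesis using True unfolding Klift_def Qd_def by (auto simp: e1 e2)
  next
    case False
    hence "v' \<noteq> v" "v' \<noteq> fl d v" by (auto simp: fl_def)
    thus ?thesis using False unfolding Klift_def Qd_def by auto
  qed
qed

lemma app_kcomp: "finite S \<Longrightarrow> app S (kcomp S Q R) f x = app S Q (app S R f) x"
proof -
  assume fin: "finite S"
  have "app S (kcomp S Q R) f x = (\<Sum>y\<in>S. \<Sum>z\<in>S. Q x z * R z y * f y)"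
    by (simp add: app_def kcomp_def sum_distrib_right)
  also have "\<dots> = (\<Sum>z\<in>S. \<Sum>y\<in>S. Q x z * R z y * f y)" by (rule sum.swap)
  also have "\<dots> = app S Q (app S R f) x"
    by (simp add: app_def sum_distrib_left mult.assoc)
  finally show ?thesis .
qed

lemma lact_kcomp: "(\<Sum>x\<in>S. m x * kcomp S Q R x y) = (\<Sum>z\<in>S. (\<Sum>x\<in>S. m x * Q x z) * R z y)"
proof -
  have "(\<Sum>x\<in>S. m x * kcomp S Q R x y) = (\<Sum>x\<in>S. \<Sum>z\<in>S. m x * Q x z * R z y)"
    by (simp add: kcomp_def sum_distrib_left mult.assoc)
  also have "\<dots> = (\<Sum>z\<in>S. \<Sum>x\<in>S. m x * Q x z * R z y)" by (rule sum.swap)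
  also have "\<dots> = (\<Sum>z\<in>S. (\<Sum>x\<in>S. m x * Q x z) * R z y)"
    by (simp add: sum_distrib_right)
  finally show ?thesis .
qed

lemma kcomp_nonneg:
  "(\<And>x y. x \<in> S \<Longrightarrow> y \<in> S \<Longrightarrow> Q x y \<ge> 0) \<Longrightarrow> (\<And>x y. x \<in> S \<Longrightarrow> y \<in> S \<Longrightarrow> R x y \<ge> 0)
   \<Longrightarrow> x \<in> S \<Longrightarrow> y \<in> S \<Longrightarrow> kcomp S Q R x y \<ge> 0"
  unfolding kcomp_def by (intro sum_nonneg) auto

lemma kcomp_assoc: "kcomp S (kcomp S Q R) T x y = kcomp S Q (kcomp S R T) x y"
proof -
  have "kcomp S (kcomp S Q R) T x y = (\<Sum>w\<in>S. \<Sum>z\<in>S. Q x z * R z w * T w y)"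
    by (simp add: kcomp_def sum_distrib_right)
  also have "\<dots> = (\<Sum>z\<in>S. \<Sum>w\<in>S. Q x z * R z w * T w y)" by (rule sum.swap)
  also have "\<dots> = kcomp S Q (kcomp S R T) x y"
    by (simp add: kcomp_def sum_distrib_left mult.assoc)
  finally show ?thesis .
qed

lemma rev_kcomp:
  assumes r: "\<And>x. x \<in> S \<Longrightarrow> r x \<in> S" "\<And>x. x \<in> S \<Longrightarrow> r (r x) = x"
    and m: "\<And>x. x \<in> S \<Longrightarrow> m (r x) = m x"
    and Q: "\<And>x y. x \<in> S \<Longrightarrow> y \<in> S \<Longrightarrow> m x * Q x y = m (r y) * Q' (r y) (r x)"
    and R: "\<And>x y. x \<in> S \<Longrightarrow> y \<in> S \<Longrightarrow> m x * R x y = m (r y) * R' (r y) (r x)"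
    and x: "x \<in> S" and y: "y \<in> S"
  shows "m x * kcomp S Q R x y = m (r y) * kcomp S R' Q' (r y) (r x)"
proof -
  have "m x * kcomp S Q R x y = (\<Sum>z\<in>S. (m x * Q x z) * R z y)"
    by (simp add: kcomp_def sum_distrib_left mult.assoc)
  also have "\<dots> = (\<Sum>z\<in>S. (m z * R z y) * Q' (r z) (r x))"
    by (rule sum.cong) (auto simp: Q[OF x] m r)
  also have "\<dots> = (\<Sum>z\<in>S. m (r y) * R' (r y) (r z) * Q' (r z) (r x))"
    by (rule sum.cong) (auto simp: R[OF _ y])
  also have "\<dots> = (\<Sum>z\<in>S. m (r y) * R' (r y) z * Q' z (r x))"
    by (rule sum.reindex_bij_witness[where i=r and j=r]) (auto simp: r)
  also have "\<dots> = m (r y) * kcomp S R' Q' (r y) (r x)"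
    by (simp add: kcomp_def sum_distrib_left mult.assoc)
  finally show ?thesis .
qed

lemma sum_lift: "(\<Sum>x\<in>(UNIV::'c::finite set) \<times> vels D. f x) = (\<Sum>c\<in>UNIV. \<Sum>v\<in>vels D. f (c, v))"
  by (simp add: sum.cartesian_product)

lemma fin_lift: "finite ((UNIV::'c::finite set) \<times> vels D)"
  by (simp add: vels_finite)

lemma sum_delta_c: "(\<Sum>c\<in>(UNIV::'c::finite set). \<Sum>v\<in>V. if c = c0 then F c v else 0) = (\<Sum>v\<in>V. F c0 v)"
proof -
  have "(\<Sum>c\<in>(UNIV::'c set). \<Sum>v\<in>V. if c = c0 then F c v else 0)
      = (\<Sum>c\<in>(UNIV::'c set). if c = c0 then (\<Sum>v\<in>V. F c v) else 0)"
    by (rule sum.cong) auto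
  thus ?thesis by simp
qed

lemma app_Fd:
  fixes f :: "'c::finite \<times> (nat \<Rightarrow> int) \<Rightarrow> real"
  assumes v: "v \<in> vels D" and d: "d \<in> {1..D}"
  shows "app (UNIV \<times> vels D) (Fd \<alpha> d) f (c, v) = (1 - \<alpha>) * f (c, v) + \<alpha> * f (c, fl d v)"
proof -
  have "app (UNIV \<times> vels D) (Fd \<alpha> d) f (c, v)
      = (\<Sum>c'\<in>UNIV. \<Sum>v'\<in>vels D. (if c' = c then (1 - \<alpha>) * (if v' = v then f (c', v') else 0)
           + \<alpha> * (if v' = fl d v then f (c', v') else 0) else 0))"
    unfolding app_def sum_lift
    using fl_ne[OF v d] by (intro sum.cong refl) (auto simp: Fd_eq[OF v d])
  also have "\<dots> = (\<Sum>v'\<in>vels D. (1 - \<alpha>) * (if v' = v then f (c, v') else 0)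
           + \<alpha> * (if v' = fl d v then f (c, v') else 0))"
    by (rule sum_delta_c)
  also have "\<dots> = (1 - \<alpha>) * (\<Sum>v'\<in>vels D. if v' = v then f (c, v') else 0)
           + \<alpha> * (\<Sum>v'\<in>vels D. if v' = fl d v then f (c, v') else 0)"
    by (simp add: sum.distrib sum_distrib_left)
  also have "\<dots> = (1 - \<alpha>) * f (c, v) + \<alpha> * f (c, fl d v)"
    using v fl_vels[OF v d] vels_finite[of D] by (simp add: sum.delta)
  finally show ?thesis .
qed

lemma app_Klift:
  fixes f :: "'c::finite \<times> (nat \<Rightarrow> int) \<Rightarrow> real"
  assumes v: "v \<in> vels D" and d: "d \<in> {1..D}"
  shows "app (UNIV \<times> vels D) (Klift K d) f (c, v) = (\<Sum>c'\<in>UNIV. K d (v d) c c' * f (c', if c' = c then fl d v else v))"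
proof -
  have "app (UNIV \<times> vels D) (Klift K d) f (c, v)
      = (\<Sum>c'\<in>UNIV. \<Sum>v'\<in>vels D. (if v' = (if c' = c then fl d v else v) then K d (v d) c c' * f (c', v') else 0))"
    unfolding app_def sum_lift
    by (intro sum.cong refl) (auto simp: Klift_eq[OF v _ d])
  also have "\<dots> = (\<Sum>c'\<in>UNIV. K d (v d) c c' * f (c', if c' = c then fl d v else v))"
    using v fl_vels[OF v d] vels_finite[of D]
    by (intro sum.cong refl) (simp add: sum.delta)
  finally show ?thesis .
qed

locale setting =
  fixes \<pi> :: "'c::finite \<Rightarrow> real"
    and D :: nat and \<alpha> :: real
    and K :: "nat \<Rightarrow> int \<Rightarrow> 'c \<Rightarrow> 'c \<Rightarrow> real"
    and p :: "'c \<Rightarrow> nat \<Rightarrow> real"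
  assumes pi_nonneg: "\<And>c. \<pi> c \<ge> 0"
    and pi_sum: "(\<Sum>c\<in>UNIV. \<pi> c) = 1"
    and alpha: "0 \<le> \<alpha>" "\<alpha> \<le> 1"
    and K_nonneg: "\<And>d s c c'. d \<in> {1..D} \<Longrightarrow> s \<in> {1, -1} \<Longrightarrow> K d s c c' \<ge> 0"
    and K_stoch: "\<And>d s c. d \<in> {1..D} \<Longrightarrow> s \<in> {1, -1} \<Longrightarrow> (\<Sum>c'\<in>UNIV. K d s c c') = 1"
    and skew_bal: "\<And>d c c'. d \<in> {1..D} \<Longrightarrow> c \<noteq> c' \<Longrightarrow>
                      \<pi> c * K d 1 c c' = \<pi> c' * K d (-1) c' c"
    and p_nonneg: "\<And>c d. d \<in> {1..D} \<Longrightarrow> p c d \<ge> 0"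
    and p_sum: "\<And>c. (\<Sum>d\<in>{1..D}. p c d) = 1"
    and p_const: "\<And>d c c'. d \<in> {1..D} \<Longrightarrow> Kavg K d c c' > 0 \<Longrightarrow> p c d = p c' d"
begin

abbreviation SS where "SS \<equiv> (UNIV::'c set) \<times> vels D"
abbreviation mt where "mt \<equiv> pitilde D \<pi>"
abbreviation PN where "PN \<equiv> KNR D \<alpha> p K"
abbreviation PR where "PR \<equiv> KR D p K"
abbreviation F where "F d \<equiv> Fd \<alpha> d :: 'c \<times> (nat \<Rightarrow> int) \<Rightarrow> 'c \<times> (nat \<Rightarrow> int) \<Rightarrow> real"
abbreviation L where "L d \<equiv> Klift K d"
definition M where "M d = kcomp SS (kcomp SS (F d) (L d)) (F d)"
definition r where "r x = (fst x, rho D (snd x))" for x :: "'c \<times> (nat \<Rightarrow> int)"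

lemma KNR_M: "PN x y = (\<Sum>d\<in>{1..D}. p (fst x) d * M d x y)"
  by (simp add: KNR_def M_def)

lemma skew: "d \<in> {1..D} \<Longrightarrow> c \<noteq> c' \<Longrightarrow> s \<in> {1, -1} \<Longrightarrow> \<pi> c * K d s c c' = \<pi> c' * K d (- s) c' c"
  using skew_bal[of d c c'] skew_bal[of d c' c] by auto

lemma Kv_nonneg: "v \<in> vels D \<Longrightarrow> d \<in> {1..D} \<Longrightarrow> K d (v d) c c' \<ge> 0"
  using K_nonneg vels_pm by blast

lemma Kv_stoch: "v \<in> vels D \<Longrightarrow> d \<in> {1..D} \<Longrightarrow> (\<Sum>c'\<in>UNIV. K d (v d) c c') = 1"
  using K_stoch vels_pm by blast

lemma Kvm_stoch: "v \<in> vels D \<Longrightarrow> d \<in> {1..D} \<Longrightarrow> (\<Sum>c'\<in>UNIV. K d (- v d) c c') = 1"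
proof -
  assume v: "v \<in> vels D" and d: "d \<in> {1..D}"
  have "- v d \<in> {1, -1}" using vels_pm[OF v d] by auto
  thus ?thesis by (rule K_stoch[OF d])
qed

lemma r_SS: "x \<in> SS \<Longrightarrow> r x \<in> SS"
  by (auto simp: r_def rho_vels)

lemma r_r: "r (r x) = x"
  by (simp add: r_def)

lemma mt_r: "mt (r x) = mt x"
  by (simp add: r_def pitilde_def)

lemma F_nonneg: "d \<in> {1..D} \<Longrightarrow> x \<in> SS \<Longrightarrow> y \<in> SS \<Longrightarrow> F d x y \<ge> 0"
  using alpha by (auto simp: Fd_def)

lemma L_nonneg: "d \<in> {1..D} \<Longrightarrow> x \<in> SS \<Longrightarrow> y \<in> SS \<Longrightarrow> L d x y \<ge> 0"
proof -
  assume d: "d \<in> {1..D}" and x: "x \<in> SS" and y: "y \<in> SS"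
  obtain c v where xv: "x = (c, v)" "v \<in> vels D" using x by auto
  obtain c' v' where yv: "y = (c', v')" "v' \<in> vels D" using y by auto
  show ?thesis using Kv_nonneg[OF xv(2) d] by (simp add: xv yv Klift_eq[OF xv(2) yv(2) d])
qed

lemma F_rows: "d \<in> {1..D} \<Longrightarrow> x \<in> SS \<Longrightarrow> (\<Sum>y\<in>SS. F d x y) = 1"
proof -
  assume d: "d \<in> {1..D}" and x: "x \<in> SS"
  obtain c v where xv: "x = (c, v)" "v \<in> vels D" using x by auto
  have "(\<Sum>y\<in>SS. F d x y) = app SS (F d) (\<lambda>_. 1) (c, v)" by (simp add: app_def xv)
  also have "\<dots> = 1" by (simp add: app_Fd[OF xv(2) d])
  finally show ?thesis .
qed

lemma L_rows: "d \<in> {1..D} \<Longrightarrow> x \<in> SS \<Longrightarrow> (\<Sum>y\<in>SS. L d x y) = 1"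
proof -
  assume d: "d \<in> {1..D}" and x: "x \<in> SS"
  obtain c v where xv: "x = (c, v)" "v \<in> vels D" using x by auto
  have "(\<Sum>y\<in>SS. L d x y) = app SS (L d) (\<lambda>_. 1) (c, v)" by (simp add: app_def xv)
  also have "\<dots> = 1" by (simp add: app_Klift[OF xv(2) d] Kv_stoch[OF xv(2) d])
  finally show ?thesis .
qed

lemma lact_F: "d \<in> {1..D} \<Longrightarrow> y \<in> SS \<Longrightarrow> (\<Sum>x\<in>SS. mt x * F d x y) = mt y"
proof -
  assume d: "d \<in> {1..D}" and y: "y \<in> SS"
  obtain c' v' where yv: "y = (c', v')" "v' \<in> vels D" using y by auto
  have "(\<Sum>x\<in>SS. mt x * F d x y) = (\<Sum>c\<in>UNIV. \<Sum>v\<in>vels D. if c = c' then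
           \<pi> c' / 2 ^ D * ((1 - \<alpha>) * (if v = v' then 1 else 0) + \<alpha> * (if v = fl d v' then 1 else 0)) else 0)"
    unfolding sum_lift yv
  proof (intro sum.cong refl)
    fix c v assume v: "v \<in> vels D"
    have e1: "(v' = v) = (v = v')" by auto
    have e2: "(v' = fl d v) = (v = fl d v')" by auto
    show "mt (c, v) * F d (c, v) (c', v') = (if c = c' then
           \<pi> c' / 2 ^ D * ((1 - \<alpha>) * (if v = v' then 1 else 0) + \<alpha> * (if v = fl d v' then 1 else 0)) else 0)"
      by (simp add: Fd_eq[OF v d] pitilde_def e1 e2)
  qed
  also have "\<dots> = (\<Sum>v\<in>vels D. \<pi> c' / 2 ^ D * ((1 - \<alpha>) * (if v = v' then 1 else 0) + \<alpha> * (if v = fl d v' then 1 else 0)))"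
    by (rule sum_delta_c)
  also have "\<dots> = \<pi> c' / 2 ^ D * (\<Sum>v\<in>vels D. (1 - \<alpha>) * (if v = v' then 1 else 0) + \<alpha> * (if v = fl d v' then 1 else 0))"
    by (rule sum_distrib_left[symmetric])
  also have "(\<Sum>v\<in>vels D. (1 - \<alpha>) * (if v = v' then 1 else 0) + \<alpha> * (if v = fl d v' then 1 else 0))
      = (1 - \<alpha>) * (\<Sum>v\<in>vels D. if v = v' then 1 else 0) + \<alpha> * (\<Sum>v\<in>vels D. if v = fl d v' then 1 else 0)"
    by (simp add: sum.distrib sum_distrib_left)
  also have "\<dots> = 1"
    using yv(2) fl_vels[OF yv(2) d] vels_finite[of D] by (simp add: sum.delta)
  finally show ?thesis by (simp add: yv pitilde_def)
qed

lemma lact_L: "d \<in> {1..D} \<Longrightarrow> y \<in> SS \<Longrightarrow> (\<Sum>x\<in>SS. mt x * L d x y) = mt y"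
proof -
  assume d: "d \<in> {1..D}" and y: "y \<in> SS"
  obtain c' v' where yv: "y = (c', v')" "v' \<in> vels D" using y by auto
  have fv: "fl d v' \<in> vels D" using fl_vels[OF yv(2) d] .
  have "(\<Sum>x\<in>SS. mt x * L d x y) = (\<Sum>c\<in>UNIV. \<Sum>v\<in>vels D.
         (if c \<noteq> c' then (if v = v' then \<pi> c / 2 ^ D * K d (v d) c c' else 0)
          else (if v = fl d v' then \<pi> c / 2 ^ D * K d (v d) c c else 0)))"
    unfolding sum_lift yv
  proof (intro sum.cong refl)
    fix c v assume v: "v \<in> vels D"
    have e2: "(v' = fl d v) = (v = fl d v')" by auto
    show "mt (c, v) * L d (c, v) (c', v') = (if c \<noteq> c' then (if v = v' then \<pi> c / 2 ^ D * K d (v d) c c' else 0)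
          else (if v = fl d v' then \<pi> c / 2 ^ D * K d (v d) c c else 0))"
      by (auto simp: Klift_eq[OF v yv(2) d] pitilde_def e2)
  qed
  also have "\<dots> = (\<Sum>c\<in>UNIV. \<pi> c' / 2 ^ D * K d (- v' d) c' c)"
  proof (rule sum.cong[OF refl])
    fix c
    show "(\<Sum>v\<in>vels D. (if c \<noteq> c' then (if v = v' then \<pi> c / 2 ^ D * K d (v d) c c' else 0)
          else (if v = fl d v' then \<pi> c / 2 ^ D * K d (v d) c c else 0))) = \<pi> c' / 2 ^ D * K d (- v' d) c' c"
    proof (cases "c = c'")
      case True then show ?thesis using fv vels_finite[of D] by (simp add: sum.delta)
    next
      case False
      have "\<pi> c * K d (v' d) c c' = \<pi> c' * K d (- v' d) c' c"
        using skew[OF d False] vels_pm[OF yv(2) d] by auto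
      then show ?thesis using False yv(2) vels_finite[of D] by (simp add: sum.delta)
    qed
  qed
  also have "\<dots> = \<pi> c' / 2 ^ D * (\<Sum>c\<in>UNIV. K d (- v' d) c' c)"
    by (rule sum_distrib_left[symmetric])
  also have "\<dots> = mt y"
    using Kvm_stoch[OF yv(2) d, of c'] by (simp add: yv pitilde_def)
  finally show ?thesis .
qed


lemma app_F_one: "d \<in> {1..D} \<Longrightarrow> x \<in> SS \<Longrightarrow> app SS (F d) (\<lambda>_. 1) x = 1"
  using F_rows by (simp add: app_def)

lemma app_L_one: "d \<in> {1..D} \<Longrightarrow> x \<in> SS \<Longrightarrow> app SS (L d) (\<lambda>_. 1) x = 1"
  using L_rows by (simp add: app_def)

lemma app_cong': "(\<And>y. y \<in> S \<Longrightarrow> f y = g y) \<Longrightarrow> app S Q f x = app S Q g x"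
  by (simp add: app_def)

lemma M_nonneg: "d \<in> {1..D} \<Longrightarrow> x \<in> SS \<Longrightarrow> y \<in> SS \<Longrightarrow> M d x y \<ge> 0"
  unfolding M_def
  by (intro kcomp_nonneg F_nonneg L_nonneg) auto

lemma M_app: "app SS (M d) f x = app SS (F d) (app SS (L d) (app SS (F d) f)) x"
  unfolding M_def by (simp only: app_kcomp[OF fin_lift])

lemma M_rows: "d \<in> {1..D} \<Longrightarrow> x \<in> SS \<Longrightarrow> (\<Sum>y\<in>SS. M d x y) = 1"
proof -
  assume d: "d \<in> {1..D}" and x: "x \<in> SS"
  have "(\<Sum>y\<in>SS. M d x y) = app SS (M d) (\<lambda>_. 1) x" by (simp add: app_def)
  also have "\<dots> = app SS (F d) (app SS (L d) (app SS (F d) (\<lambda>_. 1))) x" by (rule M_app)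
  also have "\<dots> = app SS (F d) (\<lambda>_. 1) x"
  proof (rule app_cong')
    fix y assume y: "y \<in> SS"
    have "app SS (L d) (app SS (F d) (\<lambda>_. 1)) y = app SS (L d) (\<lambda>_. 1) y"
      by (rule app_cong') (simp add: app_F_one[OF d])
    thus "app SS (L d) (app SS (F d) (\<lambda>_. 1)) y = 1" using app_L_one[OF d y] by simp
  qed
  also have "\<dots> = 1" by (rule app_F_one[OF d x])
  finally show ?thesis .
qed

lemma lact_M: "d \<in> {1..D} \<Longrightarrow> y \<in> SS \<Longrightarrow> (\<Sum>x\<in>SS. mt x * M d x y) = mt y"
proof -
  assume d: "d \<in> {1..D}" and y: "y \<in> SS"
  have "(\<Sum>x\<in>SS. mt x * M d x y) = (\<Sum>z\<in>SS. (\<Sum>x\<in>SS. mt x * kcomp SS (F d) (L d) x z) * F d z y)"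
    unfolding M_def by (rule lact_kcomp)
  also have "\<dots> = (\<Sum>z\<in>SS. mt z * F d z y)"
  proof (rule sum.cong[OF refl])
    fix z assume z: "z \<in> SS"
    have "(\<Sum>x\<in>SS. mt x * kcomp SS (F d) (L d) x z) = (\<Sum>w\<in>SS. (\<Sum>x\<in>SS. mt x * F d x w) * L d w z)"
      by (rule lact_kcomp)
    also have "\<dots> = (\<Sum>w\<in>SS. mt w * L d w z)"
      by (rule sum.cong) (auto simp: lact_F[OF d])
    also have "\<dots> = mt z" by (rule lact_L[OF d z])
    finally show "(\<Sum>x\<in>SS. mt x * kcomp SS (F d) (L d) x z) * F d z y = mt z * F d z y" by simp
  qed
  also have "\<dots> = mt y" by (rule lact_F[OF d y])
  finally show ?thesis .
qed

lemma rho_inj: "rho D a = rho D b \<longleftrightarrow> a = b"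
  by (metis rho_rho)

lemma rev_F: "d \<in> {1..D} \<Longrightarrow> x \<in> SS \<Longrightarrow> y \<in> SS \<Longrightarrow> mt x * F d x y = mt (r y) * F d (r y) (r x)"
proof -
  assume d: "d \<in> {1..D}" and x: "x \<in> SS" and y: "y \<in> SS"
  obtain c v where xv: "x = (c, v)" "v \<in> vels D" using x by auto
  obtain c' v' where yv: "y = (c', v')" "v' \<in> vels D" using y by auto
  have e1: "(rho D v = rho D v') = (v' = v)" using rho_inj by auto
  have e2: "(rho D v = fl d (rho D v')) = (v' = fl d v)"
    by (metis rho_fl[OF d] rho_inj fl_fl)
  show ?thesis
    by (simp add: xv yv r_def Fd_eq[OF xv(2) d] Fd_eq[OF rho_vels[OF yv(2)] d] e1 e2 pitilde_def)
qed

lemma rev_L: "d \<in> {1..D} \<Longrightarrow> x \<in> SS \<Longrightarrow> y \<in> SS \<Longrightarrow> mt x * L d x y = mt (r y) * L d (r y) (r x)"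
proof -
  assume d: "d \<in> {1..D}" and x: "x \<in> SS" and y: "y \<in> SS"
  obtain c v where xv: "x = (c, v)" "v \<in> vels D" using x by auto
  obtain c' v' where yv: "y = (c', v')" "v' \<in> vels D" using y by auto
  have rv: "rho D v \<in> vels D" "rho D v' \<in> vels D" using rho_vels xv yv by auto
  have e1: "(rho D v = rho D v') = (v = v')" using rho_inj by auto
  have e2: "(rho D v = fl d (rho D v')) = (v' = fl d v)"
    by (metis rho_fl[OF d] rho_inj fl_fl)
  have ra: "rho D v' d = - v' d" by (rule rho_at[OF d])
  show ?thesis
  proof (cases "c = c'")
    case True
    show ?thesis
      using True by (auto simp: xv yv r_def Klift_eq[OF xv(2) yv(2) d] Klift_eq[OF rv(2) rv(1) d] e1 e2 ra rho_at[OF d] pitilde_def)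
  next
    case False
    have sk: "\<pi> c * K d (v d) c c' = \<pi> c' * K d (- v d) c' c"
      using skew[OF d False] vels_pm[OF xv(2) d] by auto
    show ?thesis
      using False sk by (auto simp: xv yv r_def Klift_eq[OF xv(2) yv(2) d] Klift_eq[OF rv(2) rv(1) d] e1 ra pitilde_def)
  qed
qed

lemma rev_M: "d \<in> {1..D} \<Longrightarrow> x \<in> SS \<Longrightarrow> y \<in> SS \<Longrightarrow> mt x * M d x y = mt (r y) * M d (r y) (r x)"
proof -
  assume d: "d \<in> {1..D}" and x: "x \<in> SS" and y: "y \<in> SS"
  have FL: "mt a * kcomp SS (F d) (L d) a b = mt (r b) * kcomp SS (L d) (F d) (r b) (r a)"
    if "a \<in> SS" "b \<in> SS" for a b
    by (rule rev_kcomp[where S=SS and r=r and m=mt, OF _ _ _ rev_F[OF d] rev_L[OF d] that]) (auto simp: r_SS r_r mt_r)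
  have "mt x * M d x y = mt (r y) * kcomp SS (F d) (kcomp SS (L d) (F d)) (r y) (r x)"
    unfolding M_def
    by (rule rev_kcomp[where S=SS and r=r and m=mt, OF _ _ _ FL rev_F[OF d] x y]) (auto simp: r_SS r_r mt_r)
  thus ?thesis by (simp add: M_def kcomp_assoc)
qed

end

context setting
begin

lemma F_fst: "F d x z \<noteq> 0 \<Longrightarrow> fst x = fst z"
  by (auto simp: Fd_def split: prod.splits if_splits)

lemma L_p: "d \<in> {1..D} \<Longrightarrow> z \<in> SS \<Longrightarrow> w \<in> SS \<Longrightarrow> L d z w \<noteq> 0 \<Longrightarrow> p (fst z) d = p (fst w) d"
proof -
  assume d: "d \<in> {1..D}" and z: "z \<in> SS" and w: "w \<in> SS" and ne: "L d z w \<noteq> 0"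
  obtain c v where zv: "z = (c, v)" "v \<in> vels D" using z by auto
  obtain c' v' where wv: "w = (c', v')" "v' \<in> vels D" using w by auto
  show ?thesis
  proof (cases "c = c'")
    case True then show ?thesis by (simp add: zv wv)
  next
    case False
    hence "K d (v d) c c' \<noteq> 0" using ne by (simp add: zv wv Klift_eq[OF zv(2) wv(2) d] split: if_splits)
    hence pos: "K d (v d) c c' > 0" using Kv_nonneg[OF zv(2) d, of c c'] by simp
    have "K d 1 c c' \<ge> 0" "K d (-1) c c' \<ge> 0" using K_nonneg[OF d] by auto
    hence "Kavg K d c c' > 0" using pos vels_pm[OF zv(2) d] by (auto simp: Kavg_def)
    thus ?thesis using p_const[OF d] by (simp add: zv wv)
  qed
qed

lemma M_p: "d \<in> {1..D} \<Longrightarrow> x \<in> SS \<Longrightarrow> y \<in> SS \<Longrightarrow> p (fst x) d * M d x y = p (fst y) d * M d x y"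
proof -
  assume d: "d \<in> {1..D}" and x: "x \<in> SS" and y: "y \<in> SS"
  have M: "M d x y = (\<Sum>z\<in>SS. \<Sum>w\<in>SS. F d x z * L d z w * F d w y)"
    unfolding M_def kcomp_assoc by (simp add: kcomp_def sum_distrib_left mult.assoc)
  have "p (fst x) d * (F d x z * L d z w * F d w y) = p (fst y) d * (F d x z * L d z w * F d w y)"
    if z: "z \<in> SS" and w: "w \<in> SS" for z w
  proof (cases "F d x z = 0 \<or> L d z w = 0 \<or> F d w y = 0")
    case True then show ?thesis by auto
  next
    case False
    hence "fst x = fst z" "fst w = fst y" "p (fst z) d = p (fst w) d"
      using F_fst[of d x z] F_fst[of d w y] L_p[OF d z w] by auto
    thus ?thesis by simp
  qed
  hence "(\<Sum>z\<in>SS. \<Sum>w\<in>SS. p (fst x) d * (F d x z * L d z w * F d w y))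
      = (\<Sum>z\<in>SS. \<Sum>w\<in>SS. p (fst y) d * (F d x z * L d z w * F d w y))"
    by (intro sum.cong refl) blast
  thus ?thesis unfolding M by (simp add: sum_distrib_left)
qed

lemma mt_nonneg: "mt x \<ge> 0"
  by (simp add: pitilde_def pi_nonneg)

lemma mt_sum: "(\<Sum>x\<in>SS. mt x) = 1"
proof -
  have "(\<Sum>x\<in>SS. mt x) = (\<Sum>c\<in>UNIV. \<Sum>v\<in>vels D. \<pi> c / 2 ^ D)"
    by (simp add: sum_lift pitilde_def)
  also have "\<dots> = (\<Sum>c\<in>UNIV. \<pi> c)" by (simp add: vels_card)
  finally show ?thesis using pi_sum by simp
qed

lemma PN_nonneg: "x \<in> SS \<Longrightarrow> y \<in> SS \<Longrightarrow> PN x y \<ge> 0"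
  unfolding KNR_M by (intro sum_nonneg mult_nonneg_nonneg p_nonneg M_nonneg) auto

lemma PN_rows: "x \<in> SS \<Longrightarrow> (\<Sum>y\<in>SS. PN x y) = 1"
proof -
  assume x: "x \<in> SS"
  have "(\<Sum>y\<in>SS. PN x y) = (\<Sum>d\<in>{1..D}. \<Sum>y\<in>SS. p (fst x) d * M d x y)"
    unfolding KNR_M by (rule sum.swap)
  also have "\<dots> = (\<Sum>d\<in>{1..D}. p (fst x) d)"
    by (rule sum.cong) (auto simp: sum_distrib_left[symmetric] M_rows x)
  finally show ?thesis using p_sum by simp
qed

lemma PN_stat: "y \<in> SS \<Longrightarrow> (\<Sum>x\<in>SS. mt x * PN x y) = mt y"
proof -
  assume y: "y \<in> SS"
  have "(\<Sum>x\<in>SS. mt x * PN x y) = (\<Sum>d\<in>{1..D}. \<Sum>x\<in>SS. mt x * (p (fst x) d * M d x y))"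
    unfolding KNR_M sum_distrib_left by (rule sum.swap)
  also have "\<dots> = (\<Sum>d\<in>{1..D}. p (fst y) d * (\<Sum>x\<in>SS. mt x * M d x y))"
  proof (rule sum.cong[OF refl])
    fix d assume d: "d \<in> {1..D}"
    show "(\<Sum>x\<in>SS. mt x * (p (fst x) d * M d x y)) = p (fst y) d * (\<Sum>x\<in>SS. mt x * M d x y)"
      unfolding sum_distrib_left by (rule sum.cong) (auto simp: M_p[OF d _ y] algebra_simps)
  qed
  also have "\<dots> = (\<Sum>d\<in>{1..D}. p (fst y) d * mt y)"
    by (rule sum.cong) (auto simp: lact_M y)
  also have "\<dots> = mt y" using p_sum by (simp add: sum_distrib_right[symmetric])
  finally show ?thesis .
qed

lemma PN_rev: "x \<in> SS \<Longrightarrow> y \<in> SS \<Longrightarrow> mt x * PN x y = mt (r y) * PN (r y) (r x)"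
proof -
  assume x: "x \<in> SS" and y: "y \<in> SS"
  have "mt x * PN x y = (\<Sum>d\<in>{1..D}. p (fst x) d * (mt x * M d x y))"
    unfolding KNR_M sum_distrib_left by (simp add: algebra_simps)
  also have "\<dots> = (\<Sum>d\<in>{1..D}. mt (r y) * (p (fst (r y)) d * M d (r y) (r x)))"
  proof (rule sum.cong[OF refl])
    fix d assume d: "d \<in> {1..D}"
    have "p (fst (r y)) d * M d (r y) (r x) = p (fst (r x)) d * M d (r y) (r x)"
      by (rule M_p[OF d r_SS[OF y] r_SS[OF x]])
    hence e: "p (fst x) d * M d (r y) (r x) = p (fst (r y)) d * M d (r y) (r x)"
      by (simp add: r_def) (metis)
    have "p (fst x) d * (mt x * M d x y) = mt (r y) * (p (fst x) d * M d (r y) (r x))"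
      using rev_M[OF d x y] by (simp add: algebra_simps)
    also have "\<dots> = mt (r y) * (p (fst (r y)) d * M d (r y) (r x))" by (simp only: e)
    finally show "p (fst x) d * (mt x * M d x y) = mt (r y) * (p (fst (r y)) d * M d (r y) (r x))" .
  qed
  also have "\<dots> = mt (r y) * PN (r y) (r x)"
    unfolding KNR_M sum_distrib_left ..
  finally show ?thesis .
qed

lemma KR_nonneg: "PR c c' \<ge> 0"
  unfolding KR_def Kavg_def using K_nonneg p_nonneg
  by (intro sum_nonneg) (auto intro!: mult_nonneg_nonneg add_nonneg_nonneg)

lemma KR_rows: "(\<Sum>c'\<in>UNIV. PR c c') = 1"
proof -
  have "(\<Sum>c'\<in>UNIV. PR c c') = (\<Sum>d\<in>{1..D}. \<Sum>c'\<in>UNIV. p c d * Kavg K d c c')"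
    unfolding KR_def by (rule sum.swap)
  also have "\<dots> = (\<Sum>d\<in>{1..D}. p c d)"
  proof (rule sum.cong[OF refl])
    fix d assume d: "d \<in> {1..D}"
    have "(\<Sum>c'\<in>UNIV. Kavg K d c c') = ((\<Sum>c'\<in>UNIV. K d 1 c c') + (\<Sum>c'\<in>UNIV. K d (-1) c c')) / 2"
      unfolding Kavg_def sum_divide_distrib[symmetric] sum.distrib ..
    also have "\<dots> = 1" using K_stoch[OF d] by simp
    finally show "(\<Sum>c'\<in>UNIV. p c d * Kavg K d c c') = p c d" by (simp add: sum_distrib_left[symmetric])
  qed
  finally show ?thesis using p_sum by simp
qed

lemma KR_rev: "\<pi> c * PR c c' = \<pi> c' * PR c' c"
proof -
  have "\<pi> c * (p c d * Kavg K d c c') = \<pi> c' * (p c' d * Kavg K d c' c)" if d: "d \<in> {1..D}" for d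
  proof (cases "c = c'")
    case True then show ?thesis by simp
  next
    case False
    have kb: "\<pi> c * Kavg K d c c' = \<pi> c' * Kavg K d c' c"
      using skew_bal[OF d False] skew_bal[OF d False[symmetric]] by (simp add: Kavg_def algebra_simps)
    show ?thesis
    proof (cases "Kavg K d c c' > 0")
      case True
      thus ?thesis using kb p_const[OF d True] by (simp add: algebra_simps)
    next
      case False
      have "Kavg K d c c' \<ge> 0" using K_nonneg[OF d] by (simp add: Kavg_def)
      hence z: "Kavg K d c c' = 0" using False by simp
      hence "\<pi> c' * Kavg K d c' c = 0" using kb by simp
      thus ?thesis using z by auto
    qed
  qed
  thus ?thesis unfolding KR_def sum_distrib_left by (intro sum.cong) auto
qed

lemma KR_stat: "(\<Sum>c\<in>UNIV. \<pi> c * PR c c') = \<pi> c'"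
proof -
  have "(\<Sum>c\<in>UNIV. \<pi> c * PR c c') = (\<Sum>c\<in>UNIV. \<pi> c' * PR c' c)" by (simp add: KR_rev)
  also have "\<dots> = \<pi> c'" using KR_rows by (simp add: sum_distrib_left[symmetric])
  finally show ?thesis .
qed

end

sublocale setting \<subseteq> N: schain "UNIV \<times> vels D" "KNR D \<alpha> p K" "pitilde D \<pi>"
  by unfold_locales (auto simp: fin_lift PN_nonneg PN_rows mt_nonneg mt_sum PN_stat)

sublocale setting \<subseteq> R: schain "UNIV" "KR D p K" \<pi>
  by unfold_locales (auto simp: KR_nonneg KR_rows pi_nonneg pi_sum KR_stat)

context setting
begin

definition Ef :: "('c \<times> (nat \<Rightarrow> int) \<Rightarrow> real) \<Rightarrow> 'c \<Rightarrow> real" where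
  "Ef f c = (\<Sum>v\<in>vels D. f (c, v)) / 2 ^ D"

definition KS where "KS d s xf c = (\<Sum>c'\<in>UNIV. K d s c c' * xf c')"

lemma app_PN: "app SS PN f x = (\<Sum>d\<in>{1..D}. p (fst x) d * app SS (M d) f x)"
proof -
  have "app SS PN f x = (\<Sum>y\<in>SS. \<Sum>d\<in>{1..D}. p (fst x) d * M d x y * f y)"
    unfolding app_def KNR_M by (simp add: sum_distrib_right)
  also have "\<dots> = (\<Sum>d\<in>{1..D}. \<Sum>y\<in>SS. p (fst x) d * M d x y * f y)" by (rule sum.swap)
  also have "\<dots> = (\<Sum>d\<in>{1..D}. p (fst x) d * app SS (M d) f x)"
    by (simp add: app_def sum_distrib_left mult.assoc)
  finally show ?thesis .
qed

lemma app_M_lift: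
  assumes d: "d \<in> {1..D}" and v: "v \<in> vels D"
  shows "app SS (M d) (\<lambda>z. xf (fst z)) (c, v) = (1 - \<alpha>) * KS d (v d) xf c + \<alpha> * KS d (- v d) xf c"
proof -
  have i1: "app SS (F d) (\<lambda>z. xf (fst z)) y = xf (fst y)" if yS: "y \<in> SS" for y
  proof -
    obtain c1 v1 where "y = (c1, v1)" "v1 \<in> vels D" using yS by auto
    thus ?thesis by (simp add: app_Fd[OF _ d] algebra_simps)
  qed
  have i2: "app SS (L d) (app SS (F d) (\<lambda>z. xf (fst z))) y = KS d (snd y d) xf (fst y)" if yS: "y \<in> SS" for y
  proof -
    obtain c1 v1 where y: "y = (c1, v1)" "v1 \<in> vels D" using yS by auto
    have "app SS (L d) (app SS (F d) (\<lambda>z. xf (fst z))) y = app SS (L d) (\<lambda>z. xf (fst z)) y"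
      by (rule app_cong') (simp add: i1)
    also have "\<dots> = KS d (snd y d) xf (fst y)"
      by (simp add: y app_Klift[OF y(2) d] KS_def)
    finally show ?thesis .
  qed
  have "app SS (M d) (\<lambda>z. xf (fst z)) (c, v) = app SS (F d) (app SS (L d) (app SS (F d) (\<lambda>z. xf (fst z)))) (c, v)"
    by (rule M_app)
  also have "\<dots> = app SS (F d) (\<lambda>y. KS d (snd y d) xf (fst y)) (c, v)"
    by (rule app_cong') (simp add: i2)
  also have "\<dots> = (1 - \<alpha>) * KS d (v d) xf c + \<alpha> * KS d (- v d) xf c"
    by (simp add: app_Fd[OF v d])
  finally show ?thesis .
qed

lemma P3:
  assumes x: "x \<in> SS"
  shows "app SS PN (\<lambda>z. xf (fst z)) x + app SS PN (\<lambda>z. xf (fst z)) (r x) = 2 * app UNIV PR xf (fst x)"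
proof -
  obtain c v where xv: "x = (c, v)" "v \<in> vels D" using x by auto
  have rx: "r x = (c, rho D v)" "rho D v \<in> vels D" using xv rho_vels by (auto simp: r_def)
  have "app SS PN (\<lambda>z. xf (fst z)) x + app SS PN (\<lambda>z. xf (fst z)) (r x)
      = (\<Sum>d\<in>{1..D}. p c d * (app SS (M d) (\<lambda>z. xf (fst z)) (c, v) + app SS (M d) (\<lambda>z. xf (fst z)) (c, rho D v)))"
    by (simp add: app_PN xv r_def sum.distrib algebra_simps)
  also have "\<dots> = (\<Sum>d\<in>{1..D}. p c d * (KS d 1 xf c + KS d (-1) xf c))"
  proof (rule sum.cong[OF refl])
    fix d assume d: "d \<in> {1..D}"
    have "app SS (M d) (\<lambda>z. xf (fst z)) (c, v) + app SS (M d) (\<lambda>z. xf (fst z)) (c, rho D v)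
        = KS d (v d) xf c + KS d (- v d) xf c"
      by (simp add: app_M_lift[OF d xv(2)] app_M_lift[OF d rx(2)] rho_at[OF d] algebra_simps)
    also have "\<dots> = KS d 1 xf c + KS d (-1) xf c" using vels_pm[OF xv(2) d] by auto
    finally show "p c d * (app SS (M d) (\<lambda>z. xf (fst z)) (c, v) + app SS (M d) (\<lambda>z. xf (fst z)) (c, rho D v))
       = p c d * (KS d 1 xf c + KS d (-1) xf c)" by simp
  qed
  also have "\<dots> = 2 * app UNIV PR xf (fst x)"
  proof -
    have "app UNIV PR xf c = (\<Sum>c'\<in>UNIV. \<Sum>d\<in>{1..D}. p c d * Kavg K d c c' * xf c')"
      by (simp add: app_def KR_def sum_distrib_right)
    also have "\<dots> = (\<Sum>d\<in>{1..D}. \<Sum>c'\<in>UNIV. p c d * Kavg K d c c' * xf c')" by (rule sum.swap)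
    also have "\<dots> = (\<Sum>d\<in>{1..D}. p c d * ((KS d 1 xf c + KS d (-1) xf c) / 2))"
    proof (rule sum.cong[OF refl])
      fix d
      have "(\<Sum>c'\<in>UNIV. p c d * Kavg K d c c' * xf c') = p c d * (\<Sum>c'\<in>UNIV. Kavg K d c c' * xf c')"
        by (simp add: sum_distrib_left mult.assoc)
      also have "(\<Sum>c'\<in>UNIV. Kavg K d c c' * xf c') = (\<Sum>c'\<in>UNIV. (K d 1 c c' * xf c' + K d (-1) c c' * xf c') / 2)"
        by (simp add: Kavg_def algebra_simps add_divide_distrib)
      also have "\<dots> = (KS d 1 xf c + KS d (-1) xf c) / 2"
        unfolding KS_def sum_divide_distrib[symmetric] sum.distrib ..
      finally show "(\<Sum>c'\<in>UNIV. p c d * Kavg K d c c' * xf c') = p c d * ((KS d 1 xf c + KS d (-1) xf c) / 2)" .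
    qed
    finally have "app UNIV PR xf c = (\<Sum>d\<in>{1..D}. p c d * ((KS d 1 xf c + KS d (-1) xf c) / 2))" .
    hence "2 * app UNIV PR xf c = (\<Sum>d\<in>{1..D}. p c d * (KS d 1 xf c + KS d (-1) xf c))"
      by (simp add: sum_distrib_left)
    thus ?thesis by (simp add: xv)
  qed
  finally show ?thesis .
qed

end

context schain
begin

lemma ip_dec:
  assumes dec: "\<And>x. x \<in> S \<Longrightarrow> gb x = h x - A h x + c x"
  shows "ip gb f = ip h f - ip (A h) f + ip c f"
proof -
  have "ip gb f = ip (\<lambda>x. (h x - A h x) + c x) f" by (rule ip_cong) (auto simp: dec)
  thus ?thesis by (simp add: ip_add1 ip_diff1)
qed

lemma kap_eq:
  assumes dec: "\<And>x. x \<in> S \<Longrightarrow> gb x = h x - A h x + c x" and hc: "\<And>x. x \<in> S \<Longrightarrow> A c x = c x"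
  shows "ip gb c = ip c c"
  using ip_dec[OF dec, of c] harm_ip[OF hc, of h] ip_sym by simp

end

context setting
begin

lemma sum_r: "(\<Sum>x\<in>SS. G (r x)) = (\<Sum>x\<in>SS. G x)"
  by (rule sum.reindex_bij_witness[where i=r and j=r]) (auto simp: r_r r_SS)

lemma ip_r: "N.ip (\<lambda>x. f (r x)) h = N.ip f (\<lambda>x. h (r x))"
proof -
  have "N.ip f (\<lambda>x. h (r x)) = (\<Sum>x\<in>SS. (\<lambda>x. mt x * f x * h (r x)) (r x))"
    unfolding N.ip_def by (rule sum_r[symmetric])
  also have "\<dots> = N.ip (\<lambda>x. f (r x)) h" by (simp add: N.ip_def mt_r r_r)
  finally show ?thesis by simp
qed

lemma ip_rev: "N.ip (app SS PN f) h = N.ip (\<lambda>x. f (r x)) (app SS PN (\<lambda>x. h (r x)))"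
proof -
  have "N.ip (app SS PN f) h = (\<Sum>x\<in>SS. \<Sum>y\<in>SS. mt x * PN x y * f y * h x)"
    by (simp add: N.ip_def app_def sum_distrib_left sum_distrib_right algebra_simps)
  also have "\<dots> = (\<Sum>x\<in>SS. \<Sum>y\<in>SS. mt (r y) * PN (r y) (r x) * f y * h x)"
    by (intro sum.cong refl) (simp add: PN_rev)
  also have "\<dots> = (\<Sum>x\<in>SS. \<Sum>y\<in>SS. mt y * PN y (r x) * f (r y) * h x)"
  proof (rule sum.cong[OF refl])
    fix x
    show "(\<Sum>y\<in>SS. mt (r y) * PN (r y) (r x) * f y * h x) = (\<Sum>y\<in>SS. mt y * PN y (r x) * f (r y) * h x)"
      using sum_r[of "\<lambda>y. mt y * PN y (r x) * f (r y) * h x"] by (simp add: r_r)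
  qed
  also have "\<dots> = (\<Sum>x\<in>SS. \<Sum>y\<in>SS. mt y * PN y x * f (r y) * h (r x))"
    using sum_r[of "\<lambda>x. \<Sum>y\<in>SS. mt y * PN y x * f (r y) * h (r x)"] by (simp add: r_r)
  also have "\<dots> = (\<Sum>y\<in>SS. \<Sum>x\<in>SS. mt y * PN y x * f (r y) * h (r x))" by (rule sum.swap)
  also have "\<dots> = N.ip (\<lambda>x. f (r x)) (app SS PN (\<lambda>x. h (r x)))"
    by (simp add: N.ip_def app_def sum_distrib_left sum_distrib_right algebra_simps)
  finally show ?thesis .
qed

lemma lift_ip: "N.ip (\<lambda>z. xf (fst z)) f = R.ip xf (Ef f)"
  by (simp add: N.ip_def R.ip_def sum_lift Ef_def pitilde_def sum_distrib_left sum_divide_distrib algebra_simps)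

lemma Ef_lift: "Ef (\<lambda>z. y (fst z)) = y"
  by (simp add: Ef_def vels_card fun_eq_iff)

lemma lift_ip2: "N.ip (\<lambda>z. a (fst z)) (\<lambda>z. b (fst z)) = R.ip a b"
  by (simp add: lift_ip Ef_lift)

lemma R_sa: "R.ip (app UNIV PR a) b = R.ip a (app UNIV PR b)"
proof -
  have "R.ip (app UNIV PR a) b = (\<Sum>c\<in>UNIV. \<Sum>c'\<in>UNIV. \<pi> c * PR c c' * a c' * b c)"
    by (simp add: R.ip_def app_def sum_distrib_left sum_distrib_right algebra_simps)
  also have "\<dots> = (\<Sum>c\<in>UNIV. \<Sum>c'\<in>UNIV. \<pi> c' * PR c' c * a c' * b c)"
    by (intro sum.cong refl) (simp add: KR_rev)
  also have "\<dots> = (\<Sum>c'\<in>UNIV. \<Sum>c\<in>UNIV. \<pi> c' * PR c' c * a c' * b c)" by (rule sum.swap)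
  also have "\<dots> = R.ip a (app UNIV PR b)"
    by (simp add: R.ip_def app_def sum_distrib_left sum_distrib_right algebra_simps)
  finally show ?thesis .
qed

lemma mg_lift: "N.mg (\<lambda>z. g (fst z)) = R.mg g"
  by (simp add: N.mg_def R.mg_def sum_lift pitilde_def vels_card)

lemma P3': "x \<in> SS \<Longrightarrow> app SS PN (\<lambda>z. xf (fst z)) (r x) = 2 * app UNIV PR xf (fst x) - app SS PN (\<lambda>z. xf (fst z)) x"
  using P3[of x xf] by simp

lemma ip_lift_A: "N.ip (\<lambda>z. a (fst z)) (app SS PN (\<lambda>z. a (fst z))) = R.ip a (app UNIV PR a)"
proof -
  let ?a = "\<lambda>z. a (fst z)"
  let ?Aa = "app SS PN ?a"
  have "N.ip ?a (\<lambda>x. ?Aa (r x)) = N.ip (\<lambda>x. ?a (r x)) ?Aa" by (rule ip_r[symmetric])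
  also have "\<dots> = N.ip ?a ?Aa" by (simp add: r_def)
  finally have e1: "N.ip ?a (\<lambda>x. ?Aa (r x)) = N.ip ?a ?Aa" .
  have "N.ip ?a (\<lambda>x. ?Aa (r x)) = N.ip ?a (\<lambda>x. 2 * app UNIV PR a (fst x) - ?Aa x)"
    by (rule N.ip_cong) (auto simp: P3')
  also have "\<dots> = 2 * R.ip a (app UNIV PR a) - N.ip ?a ?Aa"
    using lift_ip2[of a "\<lambda>c. 2 * app UNIV PR a c"]
    by (simp add: N.ip_diff2 R.ip_def sum_distrib_left algebra_simps)
  finally show ?thesis using e1 by simp
qed

lemma F1:
  assumes Eb: "\<And>c. Ef b c = 0"
  shows "N.ip (\<lambda>z. a (fst z)) (app SS PN b) + N.ip b (app SS PN (\<lambda>z. a (fst z))) = 0"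
proof -
  let ?a = "\<lambda>z. a (fst z)"
  let ?Aa = "app SS PN ?a"
  have "N.ip ?a (app SS PN b) = N.ip (app SS PN b) ?a" by (rule N.ip_sym)
  also have "\<dots> = N.ip (\<lambda>x. b (r x)) (app SS PN (\<lambda>x. ?a (r x)))" by (rule ip_rev)
  also have "\<dots> = N.ip (\<lambda>x. b (r x)) ?Aa" by (simp add: r_def)
  also have "\<dots> = N.ip b (\<lambda>x. ?Aa (r x))" by (rule ip_r)
  also have "\<dots> = N.ip b (\<lambda>x. 2 * app UNIV PR a (fst x) - ?Aa x)"
    by (rule N.ip_cong) (auto simp: P3')
  also have "\<dots> = N.ip b (\<lambda>x. 2 * app UNIV PR a (fst x)) - N.ip b ?Aa" by (simp add: N.ip_diff2)
  also have "N.ip b (\<lambda>x. 2 * app UNIV PR a (fst x)) = 0"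
    using lift_ip[of "\<lambda>c. 2 * app UNIV PR a c" b] Eb by (simp add: N.ip_sym R.ip_def)
  finally show ?thesis by simp
qed

end

context setting
begin

lemma part_c: "asym_var SS mt PN (\<lambda>x. gt (fst x)) \<le> asym_var UNIV \<pi> PR gt"
proof -
  define gbR where "gbR = (\<lambda>c. gt c - R.mg gt)"
  obtain hR cR where decR: "\<forall>c\<in>UNIV. gbR c = hR c - app UNIV PR hR c + cR c"
      and hcR: "\<forall>c\<in>UNIV. app UNIV PR cR c = cR c"
  proof -
    have "\<exists>h c. (\<forall>x\<in>UNIV. gbR x = h x - app UNIV PR h x + c x) \<and> (\<forall>x\<in>UNIV. app UNIV PR c x = c x)"
      by (rule decomp) (simp_all add: KR_nonneg KR_rows)
    thus ?thesis using that by blast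
  qed
  define gbN where "gbN = (\<lambda>z::'c \<times> (nat \<Rightarrow> int). gt (fst z) - N.mg (\<lambda>z. gt (fst z)))"
  have gbN_eq: "gbN = (\<lambda>z. gbR (fst z))" by (simp add: gbN_def gbR_def mg_lift)
  obtain u cN where decN: "\<forall>x\<in>SS. gbN x = u x - app SS PN u x + cN x"
      and hcN: "\<forall>x\<in>SS. app SS PN cN x = cN x"
  proof -
    have "\<exists>h c. (\<forall>x\<in>SS. gbN x = h x - app SS PN h x + c x) \<and> (\<forall>x\<in>SS. app SS PN c x = c x)"
      by (rule decomp) (simp_all add: fin_lift PN_nonneg PN_rows)
    thus ?thesis using that by blast
  qed
  have aN: "asym_var SS mt PN (\<lambda>x. gt (fst x)) = (if N.ip cN cN = 0 then ereal (2 * N.ip gbN u - N.ip gbN gbN) else \<infinity>)"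
    unfolding gbN_def by (rule N.asym) (use decN hcN gbN_def in auto)
  have aR: "asym_var UNIV \<pi> PR gt = (if R.ip cR cR = 0 then ereal (2 * R.ip gbR hR - R.ip gbR gbR) else \<infinity>)"
    unfolding gbR_def by (rule R.asym) (use decR hcR gbR_def in auto)
  show ?thesis
  proof (cases "R.ip cR cR = 0")
    case False thus ?thesis using aR by simp
  next
    case True
    have ipR: "R.ip gbR w = R.ip hR w - R.ip (app UNIV PR hR) w" for w
      using R.ip_dec[of gbR hR cR w] decR R.ip_null[OF True, of w] by simp
    \<comment> \<open>Step 1: the harmonic part of the lifted chain vanishes\<close>
    have Z: "R.ip xf (app UNIV PR (Ef cN)) = R.ip xf (Ef cN)" for xf
    proof -
      let ?x = "\<lambda>z. xf (fst z)"
      have "R.ip xf (app UNIV PR (Ef cN)) = R.ip (app UNIV PR xf) (Ef cN)" by (rule R_sa[symmetric])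
      also have "\<dots> = N.ip (\<lambda>z. app UNIV PR xf (fst z)) cN" by (rule lift_ip[symmetric])
      also have "\<dots> = N.ip (\<lambda>z. (app SS PN ?x z + app SS PN ?x (r z)) / 2) cN"
        by (rule N.ip_cong) (auto simp: P3)
      also have "\<dots> = (N.ip (app SS PN ?x) cN + N.ip (\<lambda>z. app SS PN ?x (r z)) cN) / 2"
      proof -
        have h: "mt z * ((app SS PN ?x z + app SS PN ?x (r z)) / 2) * cN z
            = (mt z * app SS PN ?x z * cN z + mt z * app SS PN ?x (r z) * cN z) / 2" for z
          by (simp add: field_simps)
        show ?thesis unfolding N.ip_def h by (simp only: sum_divide_distrib[symmetric] sum.distrib)
      qed
      also have "N.ip (app SS PN ?x) cN = N.ip ?x cN" by (rule N.harm_ip) (use hcN in auto)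
      also have "N.ip (\<lambda>z. app SS PN ?x (r z)) cN = N.ip ?x cN"
      proof -
        have "N.ip (\<lambda>z. app SS PN ?x (r z)) cN = N.ip (app SS PN ?x) (\<lambda>z. cN (r z))" by (rule ip_r)
        also have "\<dots> = N.ip (\<lambda>z. ?x (r z)) (app SS PN (\<lambda>z. cN (r (r z))))" by (rule ip_rev)
        also have "\<dots> = N.ip ?x (app SS PN cN)" by (simp add: r_def r_r)
        also have "\<dots> = N.ip ?x cN" by (rule N.ip_cong) (use hcN in auto)
        finally show ?thesis .
      qed
      also have "(N.ip ?x cN + N.ip ?x cN) / 2 = R.ip xf (Ef cN)" by (simp add: lift_ip)
      finally show ?thesis .
    qed
    have cN0: "N.ip cN cN = 0"
    proof -
      have "N.ip cN cN = N.ip gbN cN"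
        by (rule N.kap_eq[symmetric]) (use decN hcN in auto)
      also have "\<dots> = R.ip gbR (Ef cN)" by (simp add: gbN_eq lift_ip)
      also have "\<dots> = R.ip hR (Ef cN) - R.ip hR (app UNIV PR (Ef cN))" by (simp add: ipR R_sa)
      also have "\<dots> = 0" by (simp add: Z)
      finally show ?thesis .
    qed
    \<comment> \<open>Step 2: comparison of the finite parts\<close>
    define a where "a = Ef u"
    define b where "b = (\<lambda>x. u x - a (fst x))"
    let ?a = "\<lambda>z. a (fst z)"
    have ub: "u = (\<lambda>x. ?a x + b x)" by (simp add: b_def)
    have Eb: "Ef b c = 0" for c
    proof -
      have "Ef b c = Ef u c - (\<Sum>v\<in>vels D. a c) / 2 ^ D"
        by (simp add: Ef_def b_def sum_subtractf diff_divide_distrib)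
      also have "\<dots> = 0" by (simp add: vels_card a_def)
      finally show ?thesis .
    qed
    have ipu: "N.ip gbN u = N.ip u u - N.ip u (app SS PN u)"
      using N.ip_dec[of gbN u cN u] decN N.ip_null[OF cN0, of u] N.ip_sym[of "app SS PN u" u] by simp
    have ipu2: "N.ip gbN u = R.ip gbR a" by (simp add: gbN_eq lift_ip a_def)
    have Au: "app SS PN u x = app SS PN ?a x + app SS PN b x" for x
      by (subst ub) (rule N.A_add)
    have e1: "N.ip u u = N.ip ?a ?a + 2 * N.ip ?a b + N.ip b b"
      by (subst (1 2) ub) (simp add: N.ip_def algebra_simps sum.distrib sum_distrib_left)
    have e2: "N.ip u (app SS PN u) = N.ip ?a (app SS PN ?a) + (N.ip ?a (app SS PN b) + N.ip b (app SS PN ?a)) + N.ip b (app SS PN b)"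
      by (subst (1) ub) (simp add: Au N.ip_def algebra_simps sum.distrib)
    have e3: "N.ip ?a b = 0" by (simp add: lift_ip Eb R.ip_def)
    have DN: "N.ip u u - N.ip u (app SS PN u) \<ge> R.ip a a - R.ip a (app UNIV PR a)"
      using e1 e2 e3 F1[OF Eb, of a] lift_ip2[of a a] ip_lift_A[of a] N.dirichlet_nonneg[of b] by simp
    have var: "0 \<le> R.ip gbR hR - 2 * R.ip gbR a + (R.ip a a - R.ip a (app UNIV PR a))"
    proof -
      define w where "w = (\<lambda>c. hR c - a c)"
      have 0: "0 \<le> R.ip w w - R.ip w (app UNIV PR w)" using R.dirichlet_nonneg[of w] by simp
      have Aw: "app UNIV PR w c = app UNIV PR hR c - app UNIV PR a c" for c
        unfolding w_def by (rule R.A_diff)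
      have s1: "R.ip hR (app UNIV PR a) = R.ip (app UNIV PR hR) a" by (rule R_sa[symmetric])
      have wA: "R.ip w (app UNIV PR w) = R.ip w (\<lambda>c. app UNIV PR hR c - app UNIV PR a c)"
        by (rule R.ip_cong) (simp_all add: Aw)
      have "R.ip w w - R.ip w (app UNIV PR w)
          = (R.ip hR hR - R.ip hR (app UNIV PR hR)) - (R.ip hR a - R.ip hR (app UNIV PR a))
            - (R.ip a hR - R.ip a (app UNIV PR hR)) + (R.ip a a - R.ip a (app UNIV PR a))"
        unfolding wA by (simp add: w_def R.ip_def algebra_simps sum.distrib sum_subtractf sum_distrib_left)
      also have "\<dots> = R.ip gbR hR - 2 * R.ip gbR a + (R.ip a a - R.ip a (app UNIV PR a))"
        using ipR[of hR] ipR[of a] s1 R.ip_sym[of a hR] R.ip_sym[of a "app UNIV PR hR"]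
          R.ip_sym[of hR "app UNIV PR hR"] by simp
      finally show ?thesis using 0 by simp
    qed
    have main: "N.ip gbN u \<le> R.ip gbR hR" using ipu ipu2 DN var by linarith
    have gg: "N.ip gbN gbN = R.ip gbR gbR" by (simp add: gbN_eq lift_ip2)
    show ?thesis using aN aR True cN0 main gg by simp
  qed
qed

end

theorem mainTheorem9:
  fixes \<pi> :: "'c::finite \<Rightarrow> real"
    and D :: nat and \<alpha> :: real
    and K :: "nat \<Rightarrow> int \<Rightarrow> 'c \<Rightarrow> 'c \<Rightarrow> real"
    and p :: "'c \<Rightarrow> nat \<Rightarrow> real"
  assumes pi_nonneg: "\<And>c. \<pi> c \<ge> 0"
    and pi_sum: "(\<Sum>c\<in>UNIV. \<pi> c) = 1"
    and alpha: "0 \<le> \<alpha>" "\<alpha> \<le> 1"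
    and K_nonneg: "\<And>d s c c'. d \<in> {1..D} \<Longrightarrow> s \<in> {1, -1} \<Longrightarrow> K d s c c' \<ge> 0"
    and K_stoch: "\<And>d s c. d \<in> {1..D} \<Longrightarrow> s \<in> {1, -1} \<Longrightarrow> (\<Sum>c'\<in>UNIV. K d s c c') = 1"
    and skew_bal: "\<And>d c c'. d \<in> {1..D} \<Longrightarrow> c \<noteq> c' \<Longrightarrow>
                      \<pi> c * K d 1 c c' = \<pi> c' * K d (-1) c' c"
    and p_nonneg: "\<And>c d. d \<in> {1..D} \<Longrightarrow> p c d \<ge> 0"
    and p_sum: "\<And>c. (\<Sum>d\<in>{1..D}. p c d) = 1"
    and p_const: "\<And>d c c'. d \<in> {1..D} \<Longrightarrow> Kavg K d c c' > 0 \<Longrightarrow> p c d = p c' d"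
  shows "(\<forall>c c'. \<pi> c * KR D p K c c' = \<pi> c' * KR D p K c' c)
       \<and> (\<forall>y\<in>UNIV \<times> vels D.
            (\<Sum>x\<in>UNIV \<times> vels D. pitilde D \<pi> x * KNR D \<alpha> p K x y) = pitilde D \<pi> y)
       \<and> (\<forall>gt :: 'c \<Rightarrow> real.
            asym_var (UNIV \<times> vels D) (pitilde D \<pi>) (KNR D \<alpha> p K) (\<lambda>x. gt (fst x))
              \<le> asym_var UNIV \<pi> (KR D p K) gt)"
proof -
  interpret S: setting \<pi> D \<alpha> K p
    by unfold_locales (fact pi_nonneg pi_sum alpha K_nonneg K_stoch skew_bal p_nonneg p_sum p_const)+
  show ?thesis
    using S.KR_rev S.PN_stat S.part_c by blast
qed

end
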